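(* Let $(X_n)$ be i.i.d. non-lattice real random variables distributed as $X$ with $\mathbb{P}(X<0)>0$, and let $(Y_n)$ be i.i.d., independent of $(X_n)$, with $\mathbb{P}(Y_1=1)=p=1-\mathbb{P}(Y_1=-1)$, $p\in[0,1)$. Assume $X\in\mathcal{S}(\gamma)$ for some $\gamma>0$ and $\varphi(\gamma)=\mathbb{E}[e^{\gamma X}]<1/p$. Let $W$ have the stationary distribution of $W_{n+1}=(Y_nW_n+X_n)^+$, i.e. $W\stackrel{D}{=}(YW+X)^+$ with $W,Y,X$ independent. Let $E_\gamma$ be exponential with parameter $\gamma$, with $X,W,E_\gamma$ independent. Then \[\mathbb{P}(W>x)\sim C_\gamma\,\mathbb{P}(X>x)\quad(x\to\infty),\] where \[C_\gamma=\frac{(1-p)p}{(1-p\varphi(\gamma))^2}\Big[\mathbb{P}(X-W+E_\gamma\le0)+\frac{p}{1-p}\mathbb{P}(X+W+E_\gamma\le0)\Big]+\frac{1-p}{(1-p\varphi(\gamma))^2}\mathbb{E}[e^{-\gamma W}].\]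
   Context: $X\in\mathcal{S}(\gamma)$ means: $\mathbb{P}(X>x+y)/\mathbb{P}(X>x)\to e^{-\gamma y}$ as $x\to\infty$ for each fixed $y$, and $\mathbb{P}(X_1+X_2>x)\sim 2\mathbb{E}[e^{\gamma X}]\mathbb{P}(X>x)$ for independent copies $X_1,X_2$. $f\sim g$ means $f(x)/g(x)\to1$. *)

theory Defs
  imports "HOL-Probability.Probability" "HOL-Library.Landau_Symbols"
begin

definition lattice_law :: "real measure \<Rightarrow> bool" where
  "lattice_law \<mu> \<longleftrightarrow>
     (\<exists>a h. h > 0 \<and> measure \<mu> {x. \<exists>k::int. x = a + of_int k * h} = 1)"

definition class_S :: "real \<Rightarrow> real measure \<Rightarrow> bool" where
  "class_S \<gamma> \<mu> \<longleftrightarrow>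
     (\<forall>y. ((\<lambda>x. measure \<mu> {x + y<..} / measure \<mu> {x<..}) \<longlongrightarrow> exp (- \<gamma> * y)) at_top)
     \<and> integrable \<mu> (\<lambda>x. exp (\<gamma> * x))
     \<and> (\<lambda>x. measure (\<mu> \<star> \<mu>) {x<..})
         \<sim>[at_top] (\<lambda>x. 2 * (\<integral>t. exp (\<gamma> * t) \<partial>\<mu>) * measure \<mu> {x<..})"

end

theory Submission
  imports Defs
begin


lemma pair_measure_fubini1:
  fixes \<rho> \<mu> :: "real measure"
  assumes "prob_space \<rho>" "prob_space \<mu>" "sets \<rho> = sets borel" "sets \<mu> = sets borel"
    and S: "S \<in> sets (borel \<Otimes>\<^sub>M borel)"
  shows "measure (\<rho> \<Otimes>\<^sub>M \<mu>) S = (\<integral>w. measure \<mu> (Pair w -` S) \<partial>\<rho>)"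
proof -
  interpret r: prob_space \<rho> by fact
  interpret m: prob_space \<mu> by fact
  interpret pair_prob_space \<rho> \<mu> ..
  have sp: "space \<rho> = UNIV" "space \<mu> = UNIV"
    using sets_eq_imp_space_eq[OF assms(3)] sets_eq_imp_space_eq[OF assms(4)] by simp_all
  have S': "S \<in> sets (\<rho> \<Otimes>\<^sub>M \<mu>)"
    using S sets_pair_measure_cong[OF assms(3,4)] by simp
  have int: "integrable (\<rho> \<Otimes>\<^sub>M \<mu>) (indicator S :: _ \<Rightarrow> real)"
    using integrable_indicator[OF S', of 1] S' by (simp add: less_top[symmetric])
  have "measure (\<rho> \<Otimes>\<^sub>M \<mu>) S = (\<integral>z. indicator S z \<partial>(\<rho> \<Otimes>\<^sub>M \<mu>))"
    using sets.sets_into_space[OF S'] by (simp add: Int_absorb2)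
  also have "\<dots> = (\<integral>w. \<integral>t. indicator S (w,t) \<partial>\<mu> \<partial>\<rho>)"
    using integral_fst'[OF int] by simp
  also have "\<dots> = (\<integral>w. measure \<mu> (Pair w -` S) \<partial>\<rho>)"
  proof (intro Bochner_Integration.integral_cong refl)
    fix w
    have "(\<lambda>t. indicator S (w,t) :: real) = indicator (Pair w -` S)"
      by (auto simp: indicator_def)
    then show "(\<integral>t. indicator S (w,t) \<partial>\<mu>) = measure \<mu> (Pair w -` S)"
      by (simp add: sp)
  qed
  finally show ?thesis .
qed

lemma pair_measure_fubini2:
  fixes \<rho> \<mu> :: "real measure"
  assumes "prob_space \<rho>" "prob_space \<mu>" "sets \<rho> = sets borel" "sets \<mu> = sets borel"
    and S: "S \<in> sets (borel \<Otimes>\<^sub>M borel)"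
  shows "measure (\<rho> \<Otimes>\<^sub>M \<mu>) S = (\<integral>t. measure \<rho> ((\<lambda>w. (w,t)) -` S) \<partial>\<mu>)"
proof -
  interpret r: prob_space \<rho> by fact
  interpret m: prob_space \<mu> by fact
  interpret pair_prob_space \<rho> \<mu> ..
  have sp: "space \<rho> = UNIV" "space \<mu> = UNIV"
    using sets_eq_imp_space_eq[OF assms(3)] sets_eq_imp_space_eq[OF assms(4)] by simp_all
  have S': "S \<in> sets (\<rho> \<Otimes>\<^sub>M \<mu>)"
    using S sets_pair_measure_cong[OF assms(3,4)] by simp
  have int: "integrable (\<rho> \<Otimes>\<^sub>M \<mu>) (indicator S :: _ \<Rightarrow> real)"
    using integrable_indicator[OF S', of 1] S' by (simp add: less_top[symmetric])
  have int': "integrable (\<rho> \<Otimes>\<^sub>M \<mu>) (\<lambda>(w,t). indicator S (w,t) :: real)"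
    using int by simp
  have "measure (\<rho> \<Otimes>\<^sub>M \<mu>) S = (\<integral>z. indicator S z \<partial>(\<rho> \<Otimes>\<^sub>M \<mu>))"
    using sets.sets_into_space[OF S'] by (simp add: Int_absorb2)
  also have "\<dots> = (\<integral>t. \<integral>w. indicator S (w,t) \<partial>\<rho> \<partial>\<mu>)"
    using integral_snd[OF int'] by simp
  also have "\<dots> = (\<integral>t. measure \<rho> ((\<lambda>w. (w,t)) -` S) \<partial>\<mu>)"
  proof (intro Bochner_Integration.integral_cong refl)
    fix t
    have "(\<lambda>w. indicator S (w,t) :: real) = indicator ((\<lambda>w. (w,t)) -` S)"
      by (auto simp: indicator_def)
    then show "(\<integral>w. indicator S (w,t) \<partial>\<rho>) = measure \<rho> ((\<lambda>w. (w,t)) -` S)"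
      by (simp add: sp)
  qed
  finally show ?thesis .
qed

lemma pair_measure_int1:
  fixes \<rho> \<mu> :: "real measure"
  assumes "prob_space \<rho>" "prob_space \<mu>" "sets \<rho> = sets borel" "sets \<mu> = sets borel"
    and S: "S \<in> sets (borel \<Otimes>\<^sub>M borel)"
  shows "integrable \<rho> (\<lambda>w. measure \<mu> (Pair w -` S))"
proof -
  interpret r: prob_space \<rho> by fact
  interpret m: prob_space \<mu> by fact
  interpret pair_prob_space \<rho> \<mu> ..
  have sp: "space \<rho> = UNIV" "space \<mu> = UNIV"
    using sets_eq_imp_space_eq[OF assms(3)] sets_eq_imp_space_eq[OF assms(4)] by simp_all
  have S': "S \<in> sets (\<rho> \<Otimes>\<^sub>M \<mu>)"
    using S sets_pair_measure_cong[OF assms(3,4)] by simp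
  have int: "integrable (\<rho> \<Otimes>\<^sub>M \<mu>) (\<lambda>(w,t). indicator S (w,t) :: real)"
    using integrable_indicator[OF S', of 1] S' by (simp add: less_top[symmetric])
  have "integrable \<rho> (\<lambda>w. \<integral>t. (indicator S (w,t) :: real) \<partial>\<mu>)"
    using integrable_fst[of "\<lambda>w t. indicator S (w,t) :: real"] int by simp
  moreover have "(\<integral>t. (indicator S (w,t) :: real) \<partial>\<mu>) = measure \<mu> (Pair w -` S)" for w
  proof -
    have "(\<lambda>t. indicator S (w,t) :: real) = indicator (Pair w -` S)"
      by (auto simp: indicator_def)
    then show ?thesis by (simp add: sp)
  qed
  ultimately show ?thesis by simp
qed

lemma pair_measure_int2:
  fixes \<rho> \<mu> :: "real measure"
  assumes "prob_space \<rho>" "prob_space \<mu>" "sets \<rho> = sets borel" "sets \<mu> = sets borel"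
    and S: "S \<in> sets (borel \<Otimes>\<^sub>M borel)"
  shows "integrable \<mu> (\<lambda>t. measure \<rho> ((\<lambda>w. (w,t)) -` S))"
proof -
  interpret r: prob_space \<rho> by fact
  interpret m: prob_space \<mu> by fact
  interpret pair_prob_space \<rho> \<mu> ..
  have sp: "space \<rho> = UNIV" "space \<mu> = UNIV"
    using sets_eq_imp_space_eq[OF assms(3)] sets_eq_imp_space_eq[OF assms(4)] by simp_all
  have S': "S \<in> sets (\<rho> \<Otimes>\<^sub>M \<mu>)"
    using S sets_pair_measure_cong[OF assms(3,4)] by simp
  have int: "integrable (\<rho> \<Otimes>\<^sub>M \<mu>) (\<lambda>(w,t). indicator S (w,t) :: real)"
    using integrable_indicator[OF S', of 1] S' by (simp add: less_top[symmetric])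
  have "integrable \<mu> (\<lambda>t. \<integral>w. (indicator S (w,t) :: real) \<partial>\<rho>)"
    using integrable_snd[of "\<lambda>w t. indicator S (w,t) :: real"] int by simp
  moreover have "(\<integral>w. (indicator S (w,t) :: real) \<partial>\<rho>) = measure \<rho> ((\<lambda>w. (w,t)) -` S)" for t
  proof -
    have "(\<lambda>w. indicator S (w,t) :: real) = indicator ((\<lambda>w. (w,t)) -` S)"
      by (auto simp: indicator_def)
    then show ?thesis by (simp add: sp)
  qed
  ultimately show ?thesis by simp
qed

lemma coll_borel2:
  "Measurable.pred (borel \<Otimes>\<^sub>M borel) P \<Longrightarrow> {p::real\<times>real. P p} \<in> sets (borel \<Otimes>\<^sub>M borel)"
  unfolding pred_def by (simp add: space_pair_measure)

locale tailS = m: prob_space \<mu> for \<mu> :: "real measure" +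
  fixes \<gamma> :: real
  assumes sets_mu: "sets \<mu> = sets borel"
    and gamma: "\<gamma> > 0" and classS: "class_S \<gamma> \<mu>"
begin

definition G :: "real \<Rightarrow> real" where "G x = measure \<mu> {x<..}"
definition phi :: real where "phi = (\<integral>t. exp (\<gamma> * t) \<partial>\<mu>)"

lemma sp[simp]: "space \<mu> = UNIV"
  using sets_eq_imp_space_eq[OF sets_mu] by simp

lemma sets_mu'[measurable_cong]: "sets \<mu> = sets borel" by (rule sets_mu)

lemma meas_cong: "borel_measurable \<mu> = borel_measurable borel"
  by (rule measurable_cong_sets[OF sets_mu refl])

lemma G_mono: "a \<le> b \<Longrightarrow> G b \<le> G a"
  unfolding G_def by (intro m.finite_measure_mono) (auto simp: sets_mu)

lemma G_nonneg: "0 \<le> G x" unfolding G_def by simp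
lemma G_le1: "G x \<le> 1" unfolding G_def by simp

lemma ratio: "((\<lambda>x. G (x + y) / G x) \<longlongrightarrow> exp (- \<gamma> * y)) at_top"
  using classS unfolding class_S_def G_def by blast

lemma int_exp: "integrable \<mu> (\<lambda>x. exp (\<gamma> * x))"
  using classS unfolding class_S_def by blast

lemma G_pos: "0 < G x"
proof (rule ccontr)
  assume "\<not> 0 < G x"
  then have z: "G x = 0" using G_nonneg[of x] by simp
  have "eventually (\<lambda>y. G (y + 0) / G y = 0) at_top"
    using eventually_ge_at_top[of x]
  proof eventually_elim
    case (elim y) then show ?case using G_mono[of x y] G_nonneg[of y] z by simp
  qed
  then have "((\<lambda>y. G (y + 0) / G y) \<longlongrightarrow> 0) at_top"
    by (rule tendsto_eventually)
  moreover have "((\<lambda>y. G (y + 0) / G y) \<longlongrightarrow> exp (- \<gamma> * 0)) at_top"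
    by (rule ratio)
  ultimately show False
    using tendsto_unique[OF trivial_limit_at_top_linorder] by fastforce
qed

lemma G_meas[measurable]: "G \<in> borel_measurable borel"
proof -
  have "mono (\<lambda>x. - G x)" by (auto simp: mono_def intro: G_mono)
  from borel_measurable_uminus[OF borel_measurable_mono[OF this]] show ?thesis by simp
qed

lemma phi_pos: "0 < phi"
proof -
  have "0 \<le> phi" unfolding phi_def by simp
  moreover have "phi \<noteq> 0"
  proof
    assume "phi = 0"
    then have "AE x in \<mu>. exp (\<gamma> * x) = 0"
      unfolding phi_def using integral_nonneg_eq_0_iff_AE[OF int_exp] by simp
    then show False using m.AE_False by simp
  qed
  ultimately show ?thesis by simp
qed

lemma dct_ratio:
  fixes \<rho> :: "real measure" and f c :: "real \<Rightarrow> real" and K :: real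
  assumes "finite_measure \<rho>" "sets \<rho> = sets borel"
    and f: "f \<in> borel_measurable borel" "\<And>w. 0 \<le> f w" "\<And>w. f w \<le> 1"
    and c: "c \<in> borel_measurable borel" "\<And>w. c w \<le> K"
  shows "((\<lambda>x. (\<integral>w. f w * G (x - c w) \<partial>\<rho>) / G x) \<longlongrightarrow> (\<integral>w. f w * exp (\<gamma> * c w) \<partial>\<rho>)) at_top"
proof -
  interpret r: finite_measure \<rho> by fact
  have mc: "borel_measurable \<rho> = borel_measurable borel"
    by (rule measurable_cong_sets[OF assms(2) refl])
  have eq: "(\<integral>w. f w * G (x - c w) \<partial>\<rho>) / G x = (\<integral>w. f w * (G (x - c w) / G x) \<partial>\<rho>)" for x
    by (simp add: field_simps)
  have ev: "eventually (\<lambda>x. G (x + - K) / G x < exp (- \<gamma> * - K) + 1) at_top"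
    using ratio[of "-K"] by (rule order_tendstoD) simp
  have "((\<lambda>x. \<integral>w. f w * (G (x - c w) / G x) \<partial>\<rho>) \<longlongrightarrow> (\<integral>w. f w * exp (\<gamma> * c w) \<partial>\<rho>)) at_top"
  proof (rule integral_dominated_convergence_at_top[where w="\<lambda>_. exp (\<gamma> * K) + 1"])
    show "(\<lambda>w. f w * exp (\<gamma> * c w)) \<in> borel_measurable \<rho>"
      unfolding mc using f c by measurable
    show "(\<lambda>w. f w * (G (x - c w) / G x)) \<in> borel_measurable \<rho>" for x
      unfolding mc using f c by measurable
    show "integrable \<rho> (\<lambda>_. exp (\<gamma> * K) + 1)" by simp
    show "AE w in \<rho>. ((\<lambda>x. f w * (G (x - c w) / G x)) \<longlongrightarrow> f w * exp (\<gamma> * c w)) at_top"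
    proof (intro AE_I2 tendsto_mult tendsto_const)
      fix w
      show "((\<lambda>x. G (x - c w) / G x) \<longlongrightarrow> exp (\<gamma> * c w)) at_top"
        using ratio[of "- c w"] by simp
    qed
    show "\<forall>\<^sub>F x in at_top. AE w in \<rho>. norm (f w * (G (x - c w) / G x)) \<le> exp (\<gamma> * K) + 1"
      using ev
    proof eventually_elim
      case (elim x)
      show ?case
      proof (intro AE_I2)
        fix w
        have "G (x - c w) \<le> G (x - K)" using c(2)[of w] by (intro G_mono) simp
        then have "G (x - c w) / G x \<le> G (x + - K) / G x"
          using G_pos[of x] by (simp add: divide_right_mono)
        also have "\<dots> \<le> exp (\<gamma> * K) + 1" using elim by simp
        finally have 1: "G (x - c w) / G x \<le> exp (\<gamma> * K) + 1" .
        have 2: "0 \<le> G (x - c w) / G x" using G_pos[of x] G_nonneg by simp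
        have "norm (f w * (G (x - c w) / G x)) = f w * (G (x - c w) / G x)"
          using f(2)[of w] G_nonneg[of "x - c w"] G_nonneg[of x] by (simp add: abs_mult)
        also have "\<dots> \<le> 1 * (G (x - c w) / G x)"
          using f(3)[of w] 2 by (intro mult_right_mono) auto
        finally show "norm (f w * (G (x - c w) / G x)) \<le> exp (\<gamma> * K) + 1" using 1 by simp
      qed
    qed
  qed
  then show ?thesis unfolding eq .
qed

definition phiA :: "real \<Rightarrow> real" where
  "phiA A = (\<integral>t. indicator {..A} t * exp (\<gamma> * t) \<partial>\<mu>)"
definition JA :: "real \<Rightarrow> real \<Rightarrow> real" where
  "JA A x = (\<integral>t. indicator {..A} t * G (x - t) \<partial>\<mu>)"
definition conv :: "real \<Rightarrow> real" where
  "conv x = measure (\<mu> \<Otimes>\<^sub>M \<mu>) {(w,t). x < w + t}"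
definition hA :: "real \<Rightarrow> real \<Rightarrow> real" where
  "hA A x = measure (\<mu> \<Otimes>\<^sub>M \<mu>) {(w,t). A < w \<and> A < t \<and> x < w + t}"

lemma phiA_le: "phiA A \<le> phi"
  unfolding phiA_def phi_def
proof (rule integral_mono)
  show "integrable \<mu> (\<lambda>t. indicator {..A} t * exp (\<gamma> * t))"
    using integrable_real_mult_indicator[OF _ int_exp, of "{..A}"] by (simp add: sets_mu mult.commute)
qed (auto simp: int_exp indicator_def)

lemma phiA_lim: "(phiA \<longlongrightarrow> phi) at_top"
  unfolding phiA_def phi_def
proof (rule integral_dominated_convergence_at_top[where w="\<lambda>t. exp (\<gamma> * t)"])
  show "(\<lambda>t. exp (\<gamma> * t)) \<in> borel_measurable \<mu>" unfolding meas_cong by measurable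
  show "(\<lambda>t. indicator {..A} t * exp (\<gamma> * t)) \<in> borel_measurable \<mu>" for A
    unfolding meas_cong by measurable
  show "integrable \<mu> (\<lambda>t. exp (\<gamma> * t))" by (rule int_exp)
  show "AE t in \<mu>. ((\<lambda>A. indicator {..A} t * exp (\<gamma> * t)) \<longlongrightarrow> exp (\<gamma> * t)) at_top"
  proof (intro AE_I2)
    fix t
    have "eventually (\<lambda>A. indicator {..A} t * exp (\<gamma> * t) = exp (\<gamma> * t)) at_top"
      using eventually_ge_at_top[of t] by eventually_elim (simp add: indicator_def)
    then show "((\<lambda>A. indicator {..A} t * exp (\<gamma> * t)) \<longlongrightarrow> exp (\<gamma> * t)) at_top"
      by (rule tendsto_eventually)
  qed
  show "\<forall>\<^sub>F A in at_top. AE t in \<mu>. norm (indicator {..A} t * exp (\<gamma> * t)) \<le> exp (\<gamma> * t)"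
    by (intro always_eventually allI AE_I2) (simp add: indicator_def)
qed

lemma JA_lim: "((\<lambda>x. JA A x / G x) \<longlongrightarrow> phiA A) at_top"
proof -
  have 1: "JA A x = (\<integral>t. indicator {..A} t * G (x - min t A) \<partial>\<mu>)" for x
    unfolding JA_def by (intro Bochner_Integration.integral_cong refl) (simp add: indicator_def)
  have 2: "phiA A = (\<integral>t. indicator {..A} t * exp (\<gamma> * min t A) \<partial>\<mu>)"
    unfolding phiA_def by (intro Bochner_Integration.integral_cong refl) (simp add: indicator_def)
  show ?thesis unfolding 1 2
    by (rule dct_ratio[where K=A]) (auto simp: sets_mu m.finite_measure_axioms indicator_def)
qed

lemma decomp:
  fixes \<rho> :: "real measure"
  assumes "prob_space \<rho>" "sets \<rho> = sets borel" and x: "2 * A \<le> x"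
  shows "measure (\<rho> \<Otimes>\<^sub>M \<mu>) {(w,t). x < w + t} =
      (\<integral>t. indicator {..A} t * measure \<rho> {x - t<..} \<partial>\<mu>)
    + (\<integral>w. indicator {..A} w * G (x - w) \<partial>\<rho>)
    + measure (\<rho> \<Otimes>\<^sub>M \<mu>) {(w,t). A < w \<and> A < t \<and> x < w + t}"
proof -
  interpret r: prob_space \<rho> by fact
  interpret pair_prob_space \<rho> \<mu> ..
  have spr: "space \<rho> = UNIV" using sets_eq_imp_space_eq[OF assms(2)] by simp
  have sP: "sets (\<rho> \<Otimes>\<^sub>M \<mu>) = sets (borel \<Otimes>\<^sub>M borel)"
    by (rule sets_pair_measure_cong[OF assms(2) sets_mu])
  define S1 where "S1 = {(w,t). t \<le> A \<and> x < w + t}"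
  define S2 where "S2 = {(w::real,t::real). A < t \<and> w \<le> A \<and> x < w + t}"
  define S3 where "S3 = {(w::real,t::real). A < w \<and> A < t \<and> x < w + t}"
  have m1: "S1 \<in> sets (borel \<Otimes>\<^sub>M borel)" unfolding S1_def case_prod_unfold by (rule coll_borel2) measurable
  have m2: "S2 \<in> sets (borel \<Otimes>\<^sub>M borel)" unfolding S2_def case_prod_unfold by (rule coll_borel2) measurable
  have m3: "S3 \<in> sets (borel \<Otimes>\<^sub>M borel)" unfolding S3_def case_prod_unfold by (rule coll_borel2) measurable
  have un: "{(w,t). x < w + t} = S1 \<union> (S2 \<union> S3)"
    unfolding S1_def S2_def S3_def by auto
  have "measure (\<rho> \<Otimes>\<^sub>M \<mu>) {(w,t). x < w + t} = measure (\<rho> \<Otimes>\<^sub>M \<mu>) S1 + (measure (\<rho> \<Otimes>\<^sub>M \<mu>) S2 + measure (\<rho> \<Otimes>\<^sub>M \<mu>) S3)"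
  proof -
    have d1: "S2 \<inter> S3 = {}" "S1 \<inter> (S2 \<union> S3) = {}" unfolding S1_def S2_def S3_def by auto
    have "measure (\<rho> \<Otimes>\<^sub>M \<mu>) (S2 \<union> S3) = measure (\<rho> \<Otimes>\<^sub>M \<mu>) S2 + measure (\<rho> \<Otimes>\<^sub>M \<mu>) S3"
      using m2 m3 d1 by (intro P.finite_measure_Union) (auto simp: sP)
    moreover have "measure (\<rho> \<Otimes>\<^sub>M \<mu>) (S1 \<union> (S2 \<union> S3)) = measure (\<rho> \<Otimes>\<^sub>M \<mu>) S1 + measure (\<rho> \<Otimes>\<^sub>M \<mu>) (S2 \<union> S3)"
      using m1 m2 m3 d1 by (intro P.finite_measure_Union) (auto simp: sP)
    ultimately show ?thesis unfolding un by simp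
  qed
  also have "measure (\<rho> \<Otimes>\<^sub>M \<mu>) S1 = (\<integral>t. indicator {..A} t * measure \<rho> {x - t<..} \<partial>\<mu>)"
    unfolding pair_measure_fubini2[OF assms(1) m.prob_space_axioms assms(2) sets_mu m1]
  proof (intro Bochner_Integration.integral_cong refl)
    fix t
    show "measure \<rho> ((\<lambda>w. (w, t)) -` S1) = indicator {..A} t * measure \<rho> {x - t<..}"
    proof (cases "t \<le> A")
      case True
      then have "(\<lambda>w. (w, t)) -` S1 = {x - t<..}" unfolding S1_def by auto
      then show ?thesis using True by simp
    next
      case False
      then have "(\<lambda>w. (w, t)) -` S1 = {}" unfolding S1_def by auto
      then show ?thesis using False by simp
    qed
  qed
  also have "measure (\<rho> \<Otimes>\<^sub>M \<mu>) S2 = (\<integral>w. indicator {..A} w * G (x - w) \<partial>\<rho>)"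
    unfolding pair_measure_fubini1[OF assms(1) m.prob_space_axioms assms(2) sets_mu m2]
  proof (intro Bochner_Integration.integral_cong refl)
    fix w
    show "measure \<mu> (Pair w -` S2) = indicator {..A} w * G (x - w)"
    proof (cases "w \<le> A")
      case True
      then have "Pair w -` S2 = {x - w<..}" unfolding S2_def using x by auto
      then show ?thesis using True by (simp add: G_def)
    next
      case False
      then have "Pair w -` S2 = {}" unfolding S2_def by auto
      then show ?thesis using False by simp
    qed
  qed
  finally show ?thesis unfolding S3_def by simp
qed

lemma conv_eq: "measure (\<mu> \<star> \<mu>) {x<..} = conv x"
proof -
  have mf: "(\<lambda>(a::real, b). a + b) \<in> measurable (\<mu> \<Otimes>\<^sub>M \<mu>) borel"
    using measurable_cong_sets[OF sets_pair_measure_cong[OF sets_mu sets_mu] refl, of borel] by simp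
  have "measure (\<mu> \<star> \<mu>) {x<..} = measure (\<mu> \<Otimes>\<^sub>M \<mu>) ((\<lambda>(a, b). a + b) -` {x<..} \<inter> space (\<mu> \<Otimes>\<^sub>M \<mu>))"
    unfolding convolution_def by (rule measure_distr[OF mf]) simp
  also have "(\<lambda>(a::real, b). a + b) -` {x<..} \<inter> space (\<mu> \<Otimes>\<^sub>M \<mu>) = {(w,t). x < w + t}"
    by (auto simp: space_pair_measure)
  finally show ?thesis unfolding conv_def .
qed

lemma conv_lim: "((\<lambda>x. conv x / G x) \<longlongrightarrow> 2 * phi) at_top"
proof -
  have "(\<lambda>x. conv x) \<sim>[at_top] (\<lambda>x. 2 * phi * G x)"
    using classS unfolding class_S_def conv_eq G_def phi_def by blast
  then have "((\<lambda>x. conv x / (2 * phi * G x)) \<longlongrightarrow> 1) at_top"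
  proof (rule asymp_equivD_strong)
    have "\<forall>x. 2 * phi * G x \<noteq> 0" using phi_pos G_pos by (simp add: less_imp_neq[symmetric])
    then show "\<forall>\<^sub>F x in at_top. conv x \<noteq> 0 \<or> 2 * phi * G x \<noteq> 0"
      by (intro always_eventually) simp
  qed
  then have "((\<lambda>x. (2 * phi) * (conv x / (2 * phi * G x))) \<longlongrightarrow> (2 * phi) * 1) at_top"
    by (intro tendsto_mult tendsto_const)
  moreover have "(2 * phi) * (conv x / (2 * phi * G x)) = conv x / G x" for x
    using phi_pos by simp
  ultimately show ?thesis by simp
qed

lemma conv_split: "2 * A \<le> x \<Longrightarrow> conv x = 2 * JA A x + hA A x"
  using decomp[OF m.prob_space_axioms sets_mu, of A x]
  unfolding conv_def hA_def JA_def G_def by simp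

lemma hA_lim: "((\<lambda>x. hA A x / G x) \<longlongrightarrow> 2 * phi - 2 * phiA A) at_top"
proof -
  have "((\<lambda>x. conv x / G x - 2 * (JA A x / G x)) \<longlongrightarrow> 2 * phi - 2 * phiA A) at_top"
    by (intro tendsto_diff tendsto_mult tendsto_const conv_lim JA_lim)
  moreover have "eventually (\<lambda>x. conv x / G x - 2 * (JA A x / G x) = hA A x / G x) at_top"
    using eventually_ge_at_top[of "2 * A"]
    by eventually_elim (simp add: conv_split diff_divide_distrib add_divide_distrib)
  ultimately show ?thesis by (rule Lim_transform_eventually)
qed

lemma tail_meas:
  fixes \<rho> :: "real measure"
  assumes "finite_measure \<rho>" "sets \<rho> = sets borel"
  shows "(\<lambda>t. measure \<rho> {x - t<..}) \<in> borel_measurable borel"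
proof -
  interpret r: finite_measure \<rho> by fact
  have "mono (\<lambda>t. measure \<rho> {x - t<..})"
    by (auto simp: mono_def assms(2) intro!: r.finite_measure_mono)
  then show ?thesis by (rule borel_measurable_mono)
qed

lemma dom1:
  fixes \<rho> :: "real measure"
  assumes "prob_space \<rho>" "sets \<rho> = sets borel" and b: "\<And>s. measure \<rho> {s<..} \<le> \<alpha> * G s"
  shows "(\<integral>t. indicator {..A} t * measure \<rho> {x - t<..} \<partial>\<mu>) \<le> \<alpha> * JA A x"
proof -
  interpret r: prob_space \<rho> by fact
  have m: "(\<lambda>t. measure \<rho> {x - t<..}) \<in> borel_measurable borel"
    by (rule tail_meas[OF r.finite_measure_axioms assms(2)])
  have "(\<integral>t. indicator {..A} t * measure \<rho> {x - t<..} \<partial>\<mu>) \<le> (\<integral>t. \<alpha> * (indicator {..A} t * G (x - t)) \<partial>\<mu>)"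
  proof (rule integral_mono)
    show "integrable \<mu> (\<lambda>t. indicator {..A} t * measure \<rho> {x - t<..})"
      by (rule m.integrable_const_bound[where B=1]) (use m in \<open>auto simp: meas_cong indicator_def\<close>)
    show "integrable \<mu> (\<lambda>t. \<alpha> * (indicator {..A} t * G (x - t)))"
      by (rule m.integrable_const_bound[where B="\<bar>\<alpha>\<bar>"])
         (auto simp: meas_cong indicator_def abs_mult G_nonneg G_le1 intro!: mult_left_le)
    show "indicator {..A} t * measure \<rho> {x - t<..} \<le> \<alpha> * (indicator {..A} t * G (x - t))" for t
      using b[of "x - t"] by (simp add: indicator_def)
  qed
  also have "\<dots> = \<alpha> * JA A x" unfolding JA_def by simp
  finally show ?thesis .
qed

lemma dom3:
  fixes \<rho> :: "real measure"
  assumes "prob_space \<rho>" "sets \<rho> = sets borel" and b: "\<And>s. measure \<rho> {s<..} \<le> \<alpha> * G s"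
  shows "measure (\<rho> \<Otimes>\<^sub>M \<mu>) {(w,t). A < w \<and> A < t \<and> x < w + t} \<le> \<alpha> * hA A x"
proof -
  interpret r: prob_space \<rho> by fact
  define S where "S = {(w::real,t::real). A < w \<and> A < t \<and> x < w + t}"
  have mS: "S \<in> sets (borel \<Otimes>\<^sub>M borel)" unfolding S_def case_prod_unfold by (rule coll_borel2) measurable
  have pre: "(\<lambda>w. (w,t)) -` S = (if A < t then {max A (x - t)<..} else {})" for t
    unfolding S_def by auto
  have "measure (\<rho> \<Otimes>\<^sub>M \<mu>) S = (\<integral>t. measure \<rho> ((\<lambda>w. (w,t)) -` S) \<partial>\<mu>)"
    by (rule pair_measure_fubini2[OF assms(1) m.prob_space_axioms assms(2) sets_mu mS])
  also have "\<dots> \<le> (\<integral>t. \<alpha> * measure \<mu> ((\<lambda>w. (w,t)) -` S) \<partial>\<mu>)"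
  proof (rule integral_mono)
    show "integrable \<mu> (\<lambda>t. measure \<rho> ((\<lambda>w. (w,t)) -` S))"
      by (rule pair_measure_int2[OF assms(1) m.prob_space_axioms assms(2) sets_mu mS])
    show "integrable \<mu> (\<lambda>t. \<alpha> * measure \<mu> ((\<lambda>w. (w,t)) -` S))"
      by (intro integrable_mult_right pair_measure_int2[OF m.prob_space_axioms m.prob_space_axioms sets_mu sets_mu mS])
    show "measure \<rho> ((\<lambda>w. (w,t)) -` S) \<le> \<alpha> * measure \<mu> ((\<lambda>w. (w,t)) -` S)" for t
      using b[of "max A (x - t)"] unfolding pre by (simp add: G_def)
  qed
  also have "\<dots> = \<alpha> * measure (\<mu> \<Otimes>\<^sub>M \<mu>) S"
    using pair_measure_fubini2[OF m.prob_space_axioms m.prob_space_axioms sets_mu sets_mu mS] by simp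
  finally show ?thesis unfolding S_def hA_def .
qed

lemma II_le:
  fixes \<rho> :: "real measure"
  assumes "prob_space \<rho>" "sets \<rho> = sets borel"
  shows "(\<integral>w. indicator {..A} w * G (x - w) \<partial>\<rho>) \<le> G (x - A)"
proof -
  interpret r: prob_space \<rho> by fact
  have mc: "borel_measurable \<rho> = borel_measurable borel"
    by (rule measurable_cong_sets[OF assms(2) refl])
  have "(\<integral>w. indicator {..A} w * G (x - w) \<partial>\<rho>) \<le> (\<integral>w. G (x - A) \<partial>\<rho>)"
  proof (rule integral_mono)
    show "integrable \<rho> (\<lambda>w. indicator {..A} w * G (x - w))"
      by (rule r.integrable_const_bound[where B=1]) (auto simp: mc indicator_def G_nonneg G_le1)
    show "indicator {..A} w * G (x - w) \<le> G (x - A)" for w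
      using G_mono[of "x - A" "x - w"] G_nonneg by (auto simp: indicator_def)
  qed simp
  also have "\<dots> = G (x - A)" by (simp add: r.prob_space)
  finally show ?thesis .
qed

lemma kesten:
  assumes p0: "0 \<le> p" and pphi: "p * phi < 1"
  obtains \<theta> K x0 where "0 \<le> \<theta>" "p * \<theta> < 1" "0 \<le> K" "0 \<le> x0"
    "\<And>\<rho> \<alpha> x. prob_space \<rho> \<Longrightarrow> sets \<rho> = sets borel \<Longrightarrow> 0 \<le> \<alpha> \<Longrightarrow>
       (\<And>s. measure \<rho> {s<..} \<le> \<alpha> * G s) \<Longrightarrow> x0 \<le> x \<Longrightarrow>
       measure (\<rho> \<Otimes>\<^sub>M \<mu>) {(w,t). x < w + t} \<le> (\<theta> * \<alpha> + K) * G x"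
proof -
  define e where "e = (1 - p * phi) / (4 * (p + 1))"
  have e: "0 < e" unfolding e_def using pphi p0 by simp
  define \<theta> where "\<theta> = phi + 2 * e"
  have "p * \<theta> = p * phi + p * (1 - p * phi) / (2 * (p + 1))"
    unfolding \<theta>_def e_def using p0 by (simp add: field_simps)
  also have "p * (1 - p * phi) / (2 * (p + 1)) < 1 - p * phi"
  proof -
    have "p < 2 * (p + 1)" using p0 by simp
    then have "p / (2 * (p + 1)) < 1" using p0 by simp
    then have "(1 - p * phi) * (p / (2 * (p + 1))) < (1 - p * phi) * 1"
      using pphi by (intro mult_strict_left_mono) auto
    then show ?thesis by (simp add: field_simps)
  qed
  finally have pth: "p * \<theta> < 1" by simp
  have th0: "0 \<le> \<theta>" unfolding \<theta>_def using phi_pos e by simp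
  have "eventually (\<lambda>A. phi - e < phiA A) at_top"
    using phiA_lim by (rule order_tendstoD) (use e in simp)
  then obtain A where A: "phi - e < phiA A" "0 \<le> A"
    using eventually_ge_at_top[of 0] by (metis (mono_tags) eventually_at_top_linorder order_refl max.cobounded1 max.cobounded2 eventually_conj_iff)
  have l1: "((\<lambda>x. conv x / G x - JA A x / G x) \<longlongrightarrow> 2 * phi - phiA A) at_top"
    by (intro tendsto_diff conv_lim JA_lim)
  have ev1: "eventually (\<lambda>x. conv x / G x - JA A x / G x < \<theta>) at_top"
    using l1 by (rule order_tendstoD) (use A e in \<open>simp add: \<theta>_def\<close>)
  define K where "K = exp (\<gamma> * A) + 1"
  have ev2: "eventually (\<lambda>x. G (x + - A) / G x < K) at_top"
    using ratio[of "-A"] by (rule order_tendstoD) (simp add: K_def)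
  obtain x0 where x0: "\<And>x. x0 \<le> x \<Longrightarrow> conv x / G x - JA A x / G x < \<theta> \<and> G (x + - A) / G x < K"
    using eventually_conj[OF ev1 ev2] by (auto simp: eventually_at_top_linorder)
  define x1 where "x1 = max x0 (max 0 (2 * A))"
  show ?thesis
  proof (rule that[of \<theta> K x1])
    show "0 \<le> \<theta>" "p * \<theta> < 1" using th0 pth by auto
    show "0 \<le> K" unfolding K_def by (simp add: add_nonneg_nonneg)
    show "0 \<le> x1" unfolding x1_def by simp
    fix \<rho> \<alpha> x assume r: "prob_space \<rho>" "sets \<rho> = sets borel" "0 \<le> \<alpha>"
      and b: "\<And>s. measure \<rho> {s<..} \<le> \<alpha> * G s" and x: "x1 \<le> x"
    have xx: "x0 \<le> x" "2 * A \<le> x" "0 \<le> x" using x unfolding x1_def by auto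
    have Gx: "0 < G x" by (rule G_pos)
    have "measure (\<rho> \<Otimes>\<^sub>M \<mu>) {(w,t). x < w + t} =
      (\<integral>t. indicator {..A} t * measure \<rho> {x - t<..} \<partial>\<mu>)
      + (\<integral>w. indicator {..A} w * G (x - w) \<partial>\<rho>)
      + measure (\<rho> \<Otimes>\<^sub>M \<mu>) {(w,t). A < w \<and> A < t \<and> x < w + t}"
      by (rule decomp[OF r(1,2) xx(2)])
    also have "\<dots> \<le> \<alpha> * JA A x + G (x - A) + \<alpha> * hA A x"
      using dom1[OF r(1,2) b, of A x] II_le[OF r(1,2), of A x] dom3[OF r(1,2) b, of A x]
      by linarith
    also have "\<alpha> * JA A x + G (x - A) + \<alpha> * hA A x = \<alpha> * (conv x - JA A x) + G (x - A)"
      using conv_split[OF xx(2)] by (simp add: algebra_simps)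
    also have "\<dots> \<le> \<alpha> * (\<theta> * G x) + K * G x"
    proof (rule add_mono)
      have "(conv x - JA A x) / G x < \<theta>" using x0[OF xx(1)] by (simp add: diff_divide_distrib)
      then have "conv x - JA A x \<le> \<theta> * G x" using Gx by (simp add: divide_less_eq)
      then show "\<alpha> * (conv x - JA A x) \<le> \<alpha> * (\<theta> * G x)" using r(3) by (rule mult_left_mono)
      have "G (x - A) / G x < K" using x0[OF xx(1)] by simp
      then show "G (x - A) \<le> K * G x" using Gx by (simp add: divide_less_eq)
    qed
    also have "\<dots> = (\<theta> * \<alpha> + K) * G x" by (simp add: algebra_simps)
    finally show "measure (\<rho> \<Otimes>\<^sub>M \<mu>) {(w,t). x < w + t} \<le> (\<theta> * \<alpha> + K) * G x" .
  qed
qed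

end

lemma eps_le:
  fixes X Y c :: real
  assumes "\<And>e. 0 < e \<Longrightarrow> X \<le> Y + e * c" "0 \<le> c"
  shows "X \<le> Y"
proof (rule ccontr)
  assume "\<not> X \<le> Y"
  then have d: "0 < X - Y" by simp
  define e where "e = (X - Y) / (c + 1)"
  have e: "0 < e" using d assms(2) unfolding e_def by simp
  have "e * c < X - Y"
  proof -
    have "e * c = (X - Y) * (c / (c + 1))" unfolding e_def by simp
    also have "\<dots> < (X - Y) * 1" using d assms(2) by (intro mult_strict_left_mono) auto
    finally show ?thesis by simp
  qed
  with assms(1)[OF e] show False by simp
qed

locale mainC = tailS \<mu> \<gamma> for \<mu> \<gamma> +
  fixes \<rho> :: "real measure" and p \<alpha> :: real
  assumes rprob: "prob_space \<rho>" and sets_rho: "sets \<rho> = sets borel"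
    and nonneg_rho: "AE w in \<rho>. 0 \<le> w"
    and p0: "0 \<le> p" and p1: "p < 1" and pphi: "p * phi < 1"
    and alpha0: "0 \<le> \<alpha>"
    and bound: "\<And>s. measure \<rho> {s<..} \<le> \<alpha> * G s"
    and eqn: "\<And>x. 0 \<le> x \<Longrightarrow> measure \<rho> {x<..} = p * measure (\<rho> \<Otimes>\<^sub>M \<mu>) {(w,t). x < w + t} + (1 - p) * (\<integral>w. G (x + w) \<partial>\<rho>)"
begin

sublocale r: prob_space \<rho> by (rule rprob)

definition F :: "real \<Rightarrow> real" where "F x = measure \<rho> {x<..}"
definition r :: "real \<Rightarrow> real" where "r x = F x / G x"
definition aA :: "real \<Rightarrow> real" where "aA A = (\<integral>w. indicator {..A} w * exp (\<gamma> * w) \<partial>\<rho>)"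
definition a :: real where "a = (\<integral>w. exp (\<gamma> * w) \<partial>\<rho>)"
definition b :: real where "b = (\<integral>w. exp (- \<gamma> * w) \<partial>\<rho>)"
definition II :: "real \<Rightarrow> real \<Rightarrow> real" where "II A x = (\<integral>w. indicator {..A} w * G (x - w) \<partial>\<rho>)"
definition I1 :: "real \<Rightarrow> real \<Rightarrow> real" where "I1 A x = (\<integral>t. indicator {..A} t * F (x - t) \<partial>\<mu>)"
definition I3 :: "real \<Rightarrow> real \<Rightarrow> real" where "I3 A x = measure (\<rho> \<Otimes>\<^sub>M \<mu>) {(w,t). A < w \<and> A < t \<and> x < w + t}"
definition B :: "real \<Rightarrow> real" where "B x = (\<integral>w. G (x + w) \<partial>\<rho>)"

lemma spr[simp]: "space \<rho> = UNIV"
  using sets_eq_imp_space_eq[OF sets_rho] by simp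

lemma meas_rho: "borel_measurable \<rho> = borel_measurable borel"
  by (rule measurable_cong_sets[OF sets_rho refl])

lemma F_nonneg: "0 \<le> F x" unfolding F_def by simp
lemma F_le1: "F x \<le> 1" unfolding F_def by simp

lemma r_nonneg: "0 \<le> r x" unfolding r_def using F_nonneg G_pos[of x] by simp
lemma r_le: "r x \<le> \<alpha>" unfolding r_def using bound[of x] G_pos[of x] by (simp add: F_def divide_le_eq)

lemma F_meas: "(\<lambda>t. F (x - t)) \<in> borel_measurable borel"
  unfolding F_def by (rule tail_meas[OF r.finite_measure_axioms sets_rho])

lemma split_eq:
  assumes "0 \<le> x" "2 * A \<le> x"
  shows "F x = p * (I1 A x + II A x + I3 A x) + (1 - p) * B x"
  using eqn[OF assms(1)] decomp[OF rprob sets_rho assms(2)]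
  unfolding F_def I1_def II_def I3_def B_def by simp

lemma I3_nonneg: "0 \<le> I3 A x" unfolding I3_def by simp

lemma I3_le: "I3 A x \<le> \<alpha> * hA A x"
  unfolding I3_def using dom3[OF rprob sets_rho bound] .

lemma lim_II: "((\<lambda>x. II A x / G x) \<longlongrightarrow> aA A) at_top"
proof -
  have 1: "II A x = (\<integral>w. indicator {..A} w * G (x - min w A) \<partial>\<rho>)" for x
    unfolding II_def by (intro Bochner_Integration.integral_cong refl) (simp add: indicator_def)
  have 2: "aA A = (\<integral>w. indicator {..A} w * exp (\<gamma> * min w A) \<partial>\<rho>)"
    unfolding aA_def by (intro Bochner_Integration.integral_cong refl) (simp add: indicator_def)
  show ?thesis unfolding 1 2
    by (rule dct_ratio[where K=A]) (auto simp: sets_rho r.finite_measure_axioms indicator_def)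
qed

lemma lim_B: "((\<lambda>x. B x / G x) \<longlongrightarrow> b) at_top"
proof -
  have 1: "B x = (\<integral>w. 1 * G (x - (- max 0 w)) \<partial>\<rho>)" for x
    unfolding B_def
  proof (intro integral_cong_AE)
    show "(\<lambda>w. G (x + w)) \<in> borel_measurable \<rho>" unfolding meas_rho by measurable
    show "(\<lambda>w. 1 * G (x - - max 0 w)) \<in> borel_measurable \<rho>" unfolding meas_rho by measurable
    show "AE w in \<rho>. G (x + w) = 1 * G (x - - max 0 w)"
      using nonneg_rho by eventually_elim simp
  qed
  have 2: "b = (\<integral>w. 1 * exp (\<gamma> * (- max 0 w)) \<partial>\<rho>)"
    unfolding b_def
  proof (intro integral_cong_AE)
    show "(\<lambda>w. exp (- \<gamma> * w)) \<in> borel_measurable \<rho>" unfolding meas_rho by measurable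
    show "(\<lambda>w. 1 * exp (\<gamma> * (- max 0 w))) \<in> borel_measurable \<rho>" unfolding meas_rho by measurable
    show "AE w in \<rho>. exp (- \<gamma> * w) = 1 * exp (\<gamma> * (- max 0 w))"
      using nonneg_rho by eventually_elim simp
  qed
  show ?thesis unfolding 1 2
    by (rule dct_ratio[where K=0]) (auto simp: sets_rho r.finite_measure_axioms)
qed

lemma I1_upper:
  assumes s0: "\<And>s. s0 \<le> s \<Longrightarrow> F s \<le> U * G s" and x: "s0 + A \<le> x"
  shows "I1 A x \<le> U * JA A x"
proof -
  have "I1 A x \<le> (\<integral>t. U * (indicator {..A} t * G (x - t)) \<partial>\<mu>)"
    unfolding I1_def
  proof (rule integral_mono)
    show "integrable \<mu> (\<lambda>t. indicator {..A} t * F (x - t))"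
      by (rule m.integrable_const_bound[where B=1]) (use F_meas in \<open>auto simp: meas_cong indicator_def F_nonneg F_le1\<close>)
    show "integrable \<mu> (\<lambda>t. U * (indicator {..A} t * G (x - t)))"
      by (rule m.integrable_const_bound[where B="\<bar>U\<bar>"])
         (auto simp: meas_cong indicator_def abs_mult G_nonneg G_le1 intro!: mult_left_le)
    show "indicator {..A} t * F (x - t) \<le> U * (indicator {..A} t * G (x - t))" for t
      using s0[of "x - t"] x by (simp add: indicator_def)
  qed
  also have "\<dots> = U * JA A x" unfolding JA_def by simp
  finally show ?thesis .
qed

lemma I1_lower:
  assumes s0: "\<And>s. s0 \<le> s \<Longrightarrow> U * G s \<le> F s" and x: "s0 + A \<le> x"
  shows "U * JA A x \<le> I1 A x"
proof -
  have "U * JA A x = (\<integral>t. U * (indicator {..A} t * G (x - t)) \<partial>\<mu>)" unfolding JA_def by simp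
  also have "\<dots> \<le> I1 A x"
    unfolding I1_def
  proof (rule integral_mono)
    show "integrable \<mu> (\<lambda>t. indicator {..A} t * F (x - t))"
      by (rule m.integrable_const_bound[where B=1]) (use F_meas in \<open>auto simp: meas_cong indicator_def F_nonneg F_le1\<close>)
    show "integrable \<mu> (\<lambda>t. U * (indicator {..A} t * G (x - t)))"
      by (rule m.integrable_const_bound[where B="\<bar>U\<bar>"])
         (auto simp: meas_cong indicator_def abs_mult G_nonneg G_le1 intro!: mult_left_le)
    show "U * (indicator {..A} t * G (x - t)) \<le> indicator {..A} t * F (x - t)" for t
      using s0[of "x - t"] x by (simp add: indicator_def)
  qed
  finally show ?thesis .
qed

lemma phiA_nonneg: "0 \<le> phiA A" unfolding phiA_def by (simp add: indicator_def)
lemma aA_nonneg: "0 \<le> aA A" unfolding aA_def by (simp add: indicator_def)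
lemma b_nonneg: "0 \<le> b" unfolding b_def by simp

lemma upper_step:
  assumes ev: "eventually (\<lambda>x. r x \<le> U) at_top"
  shows "Limsup at_top (\<lambda>x. ereal (r x)) \<le> ereal (p * U * phiA A + p * aA A + p * \<alpha> * (2 * phi - 2 * phiA A) + (1 - p) * b)"
proof -
  from ev obtain s0 where s0: "\<And>s. s0 \<le> s \<Longrightarrow> r s \<le> U" by (auto simp: eventually_at_top_linorder)
  have Fs: "F s \<le> U * G s" if "s0 \<le> s" for s
    using s0[OF that] G_pos[of s] by (simp add: r_def divide_le_eq)
  define \<psi> where "\<psi> x = p * U * (JA A x / G x) + p * (II A x / G x) + p * \<alpha> * (hA A x / G x) + (1 - p) * (B x / G x)" for x
  have lim: "(\<psi> \<longlongrightarrow> p * U * phiA A + p * aA A + p * \<alpha> * (2 * phi - 2 * phiA A) + (1 - p) * b) at_top"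
    unfolding \<psi>_def by (intro tendsto_intros JA_lim lim_II hA_lim lim_B)
  have "eventually (\<lambda>x. r x \<le> \<psi> x) at_top"
    using eventually_ge_at_top[of "max (s0 + A) (max 0 (2 * A))"]
  proof eventually_elim
    case (elim x)
    have "F x = p * (I1 A x + II A x + I3 A x) + (1 - p) * B x"
      using elim by (intro split_eq) auto
    also have "\<dots> \<le> p * (U * JA A x + II A x + \<alpha> * hA A x) + (1 - p) * B x"
    proof -
      have "I1 A x + II A x + I3 A x \<le> U * JA A x + II A x + \<alpha> * hA A x"
        using I1_upper[of s0 U A x, OF Fs] I3_le[of A x] elim by simp
      then show ?thesis using p0 by (simp add: mult_left_mono)
    qed
    finally have "F x \<le> p * (U * JA A x + II A x + \<alpha> * hA A x) + (1 - p) * B x" .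
    then have "F x / G x \<le> (p * (U * JA A x + II A x + \<alpha> * hA A x) + (1 - p) * B x) / G x"
      using G_pos[of x] by (simp add: divide_right_mono)
    also have "\<dots> = \<psi> x" unfolding \<psi>_def using G_pos[of x] by (simp add: field_simps)
    finally show ?case unfolding r_def .
  qed
  then have "Limsup at_top (\<lambda>x. ereal (r x)) \<le> Limsup at_top (\<lambda>x. ereal (\<psi> x))"
    by (intro Limsup_mono) simp
  also have "\<dots> = ereal (p * U * phiA A + p * aA A + p * \<alpha> * (2 * phi - 2 * phiA A) + (1 - p) * b)"
    using lim by (intro lim_imp_Limsup) (simp_all add: lim_ereal)
  finally show ?thesis .
qed

lemma lower_step:
  assumes ev: "eventually (\<lambda>x. U \<le> r x) at_top"
  shows "ereal (p * U * phiA A + p * aA A + (1 - p) * b) \<le> Liminf at_top (\<lambda>x. ereal (r x))"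
proof -
  from ev obtain s0 where s0: "\<And>s. s0 \<le> s \<Longrightarrow> U \<le> r s" by (auto simp: eventually_at_top_linorder)
  have Fs: "U * G s \<le> F s" if "s0 \<le> s" for s
    using s0[OF that] G_pos[of s] by (simp add: r_def le_divide_eq)
  define \<psi> where "\<psi> x = p * U * (JA A x / G x) + p * (II A x / G x) + (1 - p) * (B x / G x)" for x
  have lim: "(\<psi> \<longlongrightarrow> p * U * phiA A + p * aA A + (1 - p) * b) at_top"
    unfolding \<psi>_def by (intro tendsto_intros JA_lim lim_II lim_B)
  have "eventually (\<lambda>x. \<psi> x \<le> r x) at_top"
    using eventually_ge_at_top[of "max (s0 + A) (max 0 (2 * A))"]
  proof eventually_elim
    case (elim x)
    have "p * (U * JA A x + II A x) + (1 - p) * B x \<le> p * (I1 A x + II A x + I3 A x) + (1 - p) * B x"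
    proof -
      have "U * JA A x + II A x \<le> I1 A x + II A x + I3 A x"
        using I1_lower[of s0 U A x, OF Fs] I3_nonneg[of A x] elim by simp
      then show ?thesis using p0 by (simp add: mult_left_mono)
    qed
    also have "\<dots> = F x"
      using elim by (intro split_eq[symmetric]) auto
    finally have "p * (U * JA A x + II A x) + (1 - p) * B x \<le> F x" .
    then have "(p * (U * JA A x + II A x) + (1 - p) * B x) / G x \<le> F x / G x"
      using G_pos[of x] by (simp add: divide_right_mono)
    moreover have "(p * (U * JA A x + II A x) + (1 - p) * B x) / G x = \<psi> x"
      unfolding \<psi>_def using G_pos[of x] by (simp add: field_simps)
    ultimately show ?case unfolding r_def by simp
  qed
  then have "Liminf at_top (\<lambda>x. ereal (\<psi> x)) \<le> Liminf at_top (\<lambda>x. ereal (r x))"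
    by (intro Liminf_mono) simp
  moreover have "Liminf at_top (\<lambda>x. ereal (\<psi> x)) = ereal (p * U * phiA A + p * aA A + (1 - p) * b)"
    using lim by (intro lim_imp_Liminf) (simp_all add: lim_ereal)
  ultimately show ?thesis by simp
qed

definition Linf :: ereal where "Linf = Liminf at_top (\<lambda>x. ereal (r x))"
definition Lsup :: ereal where "Lsup = Limsup at_top (\<lambda>x. ereal (r x))"

lemma Linf_ge0: "0 \<le> Linf"
  unfolding Linf_def by (rule Liminf_bounded) (simp add: r_nonneg)
lemma Lsup_le: "Lsup \<le> ereal \<alpha>"
  unfolding Lsup_def by (rule Limsup_bounded) (simp add: r_le)
lemma Linf_le_Lsup: "Linf \<le> Lsup"
  unfolding Linf_def Lsup_def by (rule Liminf_le_Limsup) simp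

definition l :: real where "l = real_of_ereal Linf"
definition L :: real where "L = real_of_ereal Lsup"

lemma Linf_eq: "Linf = ereal l" and Lsup_eq: "Lsup = ereal L"
proof -
  have "0 \<le> Linf" "Linf \<le> ereal \<alpha>" "0 \<le> Lsup" "Lsup \<le> ereal \<alpha>"
    using Linf_ge0 Lsup_le Linf_le_Lsup by (auto intro: order.trans)
  then show "Linf = ereal l" "Lsup = ereal L" unfolding l_def L_def
    by (cases Linf; cases Lsup; simp)+
qed

lemma l_nonneg: "0 \<le> l" using Linf_ge0 Linf_eq by simp
lemma l_le_L: "l \<le> L" using Linf_le_Lsup Linf_eq Lsup_eq by simp
lemma L_le: "L \<le> \<alpha>" using Lsup_le Lsup_eq by simp

lemma lower_ineq: "p * l * phiA A + p * aA A + (1 - p) * b \<le> l"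
proof (rule eps_le[where c = "p * phiA A"])
  fix e :: real assume e: "0 < e"
  have "ereal (l - e) < Linf" using e Linf_eq by simp
  then have "eventually (\<lambda>x. ereal (l - e) < ereal (r x)) at_top"
    unfolding Linf_def by (rule less_LiminfD)
  then have "eventually (\<lambda>x. l - e \<le> r x) at_top"
    by eventually_elim simp
  from lower_step[OF this, of A]
  have "p * (l - e) * phiA A + p * aA A + (1 - p) * b \<le> l"
    using Linf_eq unfolding Linf_def by simp
  then show "p * l * phiA A + p * aA A + (1 - p) * b \<le> l + e * (p * phiA A)"
    by (simp add: algebra_simps)
qed (use p0 phiA_nonneg in simp)

lemma upper_ineq: "L \<le> p * L * phiA A + p * aA A + p * \<alpha> * (2 * phi - 2 * phiA A) + (1 - p) * b"
proof (rule eps_le[where c = "p * phiA A"])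
  fix e :: real assume e: "0 < e"
  have "Lsup < ereal (L + e)" using e Lsup_eq by simp
  then have "eventually (\<lambda>x. ereal (r x) < ereal (L + e)) at_top"
    unfolding Lsup_def by (rule Limsup_lessD)
  then have "eventually (\<lambda>x. r x \<le> L + e) at_top"
    by eventually_elim simp
  from upper_step[OF this, of A]
  have "L \<le> p * (L + e) * phiA A + p * aA A + p * \<alpha> * (2 * phi - 2 * phiA A) + (1 - p) * b"
    using Lsup_eq unfolding Lsup_def by simp
  then show "L \<le> p * L * phiA A + p * aA A + p * \<alpha> * (2 * phi - 2 * phiA A) + (1 - p) * b + e * (p * phiA A)"
    by (simp add: algebra_simps)
qed (use p0 phiA_nonneg in simp)

lemma int_a:
  assumes "0 < p"
  shows "integrable \<rho> (\<lambda>w. exp (\<gamma> * w))"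
proof -
  define f where "f n w = indicator {..real n} w * exp (\<gamma> * w)" for n :: nat and w
  have bnd: "aA A \<le> l / p" for A
  proof -
    have "p * aA A \<le> l"
      using lower_ineq[of A] p0 p1 l_nonneg phiA_nonneg[of A] b_nonneg
      by (smt (verit) mult_nonneg_nonneg)
    then show ?thesis using assms by (simp add: le_divide_eq mult.commute)
  qed
  have intf: "integrable \<rho> (f n)" for n
  proof (rule r.integrable_const_bound[where B="exp (\<gamma> * real n)"])
    show "AE w in \<rho>. norm (f n w) \<le> exp (\<gamma> * real n)"
      using gamma by (intro AE_I2) (auto simp: f_def indicator_def)
    show "f n \<in> borel_measurable \<rho>" unfolding meas_rho f_def by measurable
  qed
  have inc: "incseq (\<lambda>n. integral\<^sup>L \<rho> (f n))"
  proof (rule incseq_SucI)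
    fix n
    show "integral\<^sup>L \<rho> (f n) \<le> integral\<^sup>L \<rho> (f (Suc n))"
      by (intro integral_mono intf) (auto simp: f_def indicator_def)
  qed
  have "\<forall>n. integral\<^sup>L \<rho> (f n) \<le> l / p"
    using bnd unfolding f_def aA_def by simp
  from incseq_convergent[OF inc this] obtain LL where LL: "(\<lambda>n. integral\<^sup>L \<rho> (f n)) \<longlonglongrightarrow> LL" by blast
  show ?thesis
  proof (rule integrable_monotone_convergence[OF intf _ _ LL])
    show "AE w in \<rho>. mono (\<lambda>n. f n w)"
      by (intro AE_I2) (auto simp: mono_def f_def indicator_def)
    show "AE w in \<rho>. (\<lambda>n. f n w) \<longlonglongrightarrow> exp (\<gamma> * w)"
    proof (intro AE_I2)
      fix w
      obtain N :: nat where "w \<le> real N" using real_arch_simple by blast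
      then have "eventually (\<lambda>n. f n w = exp (\<gamma> * w)) sequentially"
        unfolding eventually_sequentially
        by (intro exI[of _ N]) (auto simp: f_def indicator_def intro: order.trans)
      then show "(\<lambda>n. f n w) \<longlonglongrightarrow> exp (\<gamma> * w)" by (rule tendsto_eventually)
    qed
    show "(\<lambda>w. exp (\<gamma> * w)) \<in> borel_measurable \<rho>" unfolding meas_rho by measurable
  qed
qed

lemma aA_lim: "((\<lambda>A. p * aA A) \<longlongrightarrow> p * a) at_top"
proof (cases "p = 0")
  case True then show ?thesis by simp
next
  case False
  then have int: "integrable \<rho> (\<lambda>w. exp (\<gamma> * w))" using int_a p0 by simp
  have "(aA \<longlongrightarrow> a) at_top"
    unfolding aA_def a_def
  proof (rule integral_dominated_convergence_at_top[where w="\<lambda>t. exp (\<gamma> * t)"])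
    show "(\<lambda>t. exp (\<gamma> * t)) \<in> borel_measurable \<rho>" unfolding meas_rho by measurable
    show "(\<lambda>t. indicator {..A} t * exp (\<gamma> * t)) \<in> borel_measurable \<rho>" for A
      unfolding meas_rho by measurable
    show "integrable \<rho> (\<lambda>t. exp (\<gamma> * t))" by (rule int)
    show "AE t in \<rho>. ((\<lambda>A. indicator {..A} t * exp (\<gamma> * t)) \<longlongrightarrow> exp (\<gamma> * t)) at_top"
    proof (intro AE_I2)
      fix t
      have "eventually (\<lambda>A. indicator {..A} t * exp (\<gamma> * t) = exp (\<gamma> * t)) at_top"
        using eventually_ge_at_top[of t] by eventually_elim (simp add: indicator_def)
      then show "((\<lambda>A. indicator {..A} t * exp (\<gamma> * t)) \<longlongrightarrow> exp (\<gamma> * t)) at_top"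
        by (rule tendsto_eventually)
    qed
    show "\<forall>\<^sub>F A in at_top. AE t in \<rho>. norm (indicator {..A} t * exp (\<gamma> * t)) \<le> exp (\<gamma> * t)"
      by (intro always_eventually allI AE_I2) (simp add: indicator_def)
  qed
  then show ?thesis by (intro tendsto_mult tendsto_const)
qed

definition C0 :: real where "C0 = (p * a + (1 - p) * b) / (1 - p * phi)"

lemma l_ge: "p * l * phi + p * a + (1 - p) * b \<le> l"
proof (rule tendsto_le[OF _ tendsto_const])
  show "((\<lambda>A. p * l * phiA A + p * aA A + (1 - p) * b) \<longlongrightarrow> p * l * phi + p * a + (1 - p) * b) at_top"
    by (intro tendsto_intros phiA_lim aA_lim)
  show "\<forall>\<^sub>F A in at_top. p * l * phiA A + p * aA A + (1 - p) * b \<le> l"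
    by (intro always_eventually allI lower_ineq)
qed simp

lemma L_le': "L \<le> p * L * phi + p * a + (1 - p) * b"
proof -
  have "((\<lambda>A. p * L * phiA A + p * aA A + p * \<alpha> * (2 * phi - 2 * phiA A) + (1 - p) * b) \<longlongrightarrow>
      p * L * phi + p * a + p * \<alpha> * (2 * phi - 2 * phi) + (1 - p) * b) at_top"
    by (intro tendsto_intros phiA_lim aA_lim)
  then have lim: "((\<lambda>A. p * L * phiA A + p * aA A + p * \<alpha> * (2 * phi - 2 * phiA A) + (1 - p) * b) \<longlongrightarrow>
      p * L * phi + p * a + (1 - p) * b) at_top" by simp
  show ?thesis
    by (rule tendsto_le[OF _ lim tendsto_const]) (auto intro!: always_eventually upper_ineq)
qed

theorem main_lim: "(r \<longlongrightarrow> C0) at_top"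
proof -
  have d: "0 < 1 - p * phi" using pphi by simp
  have "C0 \<le> l" unfolding C0_def using l_ge d by (simp add: divide_le_eq algebra_simps)
  moreover have "L \<le> C0" unfolding C0_def using L_le' d by (simp add: le_divide_eq algebra_simps)
  ultimately have eq: "l = C0" "L = C0" using l_le_L by auto
  have "((\<lambda>x. ereal (r x)) \<longlongrightarrow> ereal C0) at_top"
    by (rule Liminf_eq_Limsup) (use Linf_eq Lsup_eq eq in \<open>simp_all add: Linf_def Lsup_def\<close>)
  then show ?thesis by (simp add: lim_ereal)
qed

end




lemma gfub1:
  assumes "prob_space A" "prob_space B" and S: "S \<in> sets (A \<Otimes>\<^sub>M B)"
  shows "measure (A \<Otimes>\<^sub>M B) S = (\<integral>x. measure B (Pair x -` S) \<partial>A)"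
    and "integrable A (\<lambda>x. measure B (Pair x -` S))"
proof -
  interpret a: prob_space A by fact
  interpret b: prob_space B by fact
  interpret pair_prob_space A B ..
  have int: "integrable (A \<Otimes>\<^sub>M B) (\<lambda>(x,y). indicator S (x,y) :: real)"
    using integrable_indicator[OF S, of 1] S by (simp add: less_top[symmetric])
  have eq: "(\<integral>y. (indicator S (x,y) :: real) \<partial>B) = measure B (Pair x -` S)" for x
  proof -
    have "(\<lambda>y. indicator S (x,y) :: real) = indicator (Pair x -` S)"
      by (auto simp: indicator_def)
    moreover have "Pair x -` S \<inter> space B = Pair x -` S"
      using sets.sets_into_space[OF sets_Pair1[OF S, of x]] by auto
    ultimately show ?thesis by simp
  qed
  have "measure (A \<Otimes>\<^sub>M B) S = (\<integral>z. indicator S z \<partial>(A \<Otimes>\<^sub>M B))"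
    using sets.sets_into_space[OF S] by (simp add: Int_absorb2)
  also have "\<dots> = (\<integral>x. \<integral>y. (indicator S (x,y) :: real) \<partial>B \<partial>A)"
    using integral_fst[of "\<lambda>x y. indicator S (x,y) :: real"] int by simp
  finally show "measure (A \<Otimes>\<^sub>M B) S = (\<integral>x. measure B (Pair x -` S) \<partial>A)"
    unfolding eq .
  have "integrable A (\<lambda>x. \<integral>y. (indicator S (x,y) :: real) \<partial>B)"
    using integrable_fst[of "\<lambda>x y. indicator S (x,y) :: real"] int by simp
  then show "integrable A (\<lambda>x. measure B (Pair x -` S))" unfolding eq .
qed

locale thm_setup =
  fixes M :: "'a measure" and X Y W E :: "'a \<Rightarrow> real" and p \<gamma> :: real
  assumes Mprob: "prob_space M"
    and indep: "prob_space.indep_vars M (\<lambda>_. borel) (\<lambda>i. [X, Y, W, E] ! i) {..<4}"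
    and neg: "measure M {\<omega> \<in> space M. X \<omega> < 0} > 0"
    and p0: "0 \<le> p" and p1: "p < 1"
    and Y1: "measure M {\<omega> \<in> space M. Y \<omega> = 1} = p"
    and Ym1: "measure M {\<omega> \<in> space M. Y \<omega> = -1} = 1 - p"
    and gamma: "\<gamma> > 0"
    and classS: "class_S \<gamma> (distr M borel X)"
    and phiM: "p * (\<integral>\<omega>. exp (\<gamma> * X \<omega>) \<partial>M) < 1"
    and stat: "distr M borel (\<lambda>\<omega>. max 0 (Y \<omega> * W \<omega> + X \<omega>)) = distr M borel W"
    and Eexp: "distributed M lborel E (exponential_density \<gamma>)"
begin

sublocale P: prob_space M by (rule Mprob)

lemma rv: "X \<in> borel_measurable M" "Y \<in> borel_measurable M" "W \<in> borel_measurable M" "E \<in> borel_measurable M"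
proof -
  have "\<forall>i\<in>{..<4::nat}. ([X, Y, W, E] ! i) \<in> borel_measurable M"
    using conjunct1[OF indep[unfolded P.indep_vars_def]] .
  then show "X \<in> borel_measurable M" "Y \<in> borel_measurable M" "W \<in> borel_measurable M" "E \<in> borel_measurable M"
    by (auto dest: bspec[where x=0] bspec[where x=1] bspec[where x=2] bspec[where x=3])
qed

lemma indep_restr:
  fixes A B :: "nat set"
  assumes "A \<inter> B = {}" "A \<subseteq> {..<4}" "B \<subseteq> {..<4}"
  shows "P.indep_var (PiM A (\<lambda>_. borel)) (\<lambda>\<omega>. restrict (\<lambda>i. ([X, Y, W, E] ! i) \<omega>) A)
                     (PiM B (\<lambda>_. borel)) (\<lambda>\<omega>. restrict (\<lambda>i. ([X, Y, W, E] ! i) \<omega>) B)"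
  by (rule P.indep_var_restrict[OF indep assms])

definition rr :: "nat set \<Rightarrow> 'a \<Rightarrow> nat \<Rightarrow> real" where
  "rr A \<omega> = restrict (\<lambda>i. ([X, Y, W, E] ! i) \<omega>) A"

lemma indep_fun:
  fixes A B :: "nat set" and f g :: "(nat \<Rightarrow> real) \<Rightarrow> real"
  assumes "A \<inter> B = {}" "A \<subseteq> {..<4}" "B \<subseteq> {..<4}"
    and f: "f \<in> borel_measurable (PiM A (\<lambda>_. borel))" and g: "g \<in> borel_measurable (PiM B (\<lambda>_. borel))"
  shows "P.indep_var borel (\<lambda>\<omega>. f (rr A \<omega>)) borel (\<lambda>\<omega>. g (rr B \<omega>))"
  using P.indep_var_compose[OF indep_restr[OF assms(1-3)] f g] unfolding rr_def comp_def .

lemma rr_app: "i \<in> A \<Longrightarrow> rr A \<omega> i = ([X, Y, W, E] ! i) \<omega>"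
  unfolding rr_def by simp

lemma rr_meas: "A \<subseteq> {..<4} \<Longrightarrow> rr A \<in> measurable M (PiM A (\<lambda>_. borel))"
  unfolding rr_def
proof (rule measurable_restrict)
  fix i assume "A \<subseteq> {..<4}" "i \<in> A"
  then have "i < 4" by auto
  then have "i = 0 \<or> i = 1 \<or> i = 2 \<or> i = 3" by auto
  then show "(\<lambda>\<omega>. ([X, Y, W, E] ! i) \<omega>) \<in> borel_measurable M" using rv by auto
qed

lemma joint_law:
  fixes A B :: "nat set" and f :: "(nat \<Rightarrow> real) \<Rightarrow> 'b" and g :: "(nat \<Rightarrow> real) \<Rightarrow> 'c"
  assumes AB: "A \<inter> B = {}" "A \<subseteq> {..<4}" "B \<subseteq> {..<4}"
    and f: "f \<in> measurable (PiM A (\<lambda>_. borel)) S" and g: "g \<in> measurable (PiM B (\<lambda>_. borel)) T"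
  shows "distr M (S \<Otimes>\<^sub>M T) (\<lambda>\<omega>. (f (rr A \<omega>), g (rr B \<omega>))) =
         distr M S (\<lambda>\<omega>. f (rr A \<omega>)) \<Otimes>\<^sub>M distr M T (\<lambda>\<omega>. g (rr B \<omega>))"
proof -
  have ind: "P.indep_var (PiM A (\<lambda>_. borel)) (rr A) (PiM B (\<lambda>_. borel)) (rr B)"
    using indep_restr[OF AB] unfolding rr_def[abs_def] .
  have mA: "rr A \<in> measurable M (PiM A (\<lambda>_. borel))" and mB: "rr B \<in> measurable M (PiM B (\<lambda>_. borel))"
    using rr_meas AB by auto
  have D: "distr M (PiM A (\<lambda>_. borel) \<Otimes>\<^sub>M PiM B (\<lambda>_. borel)) (\<lambda>\<omega>. (rr A \<omega>, rr B \<omega>)) =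
      distr M (PiM A (\<lambda>_. borel)) (rr A) \<Otimes>\<^sub>M distr M (PiM B (\<lambda>_. borel)) (rr B)"
    using P.indep_var_distribution_eq[THEN iffD1, OF ind] by simp
  have pm: "(\<lambda>\<omega>. (rr A \<omega>, rr B \<omega>)) \<in> measurable M (PiM A (\<lambda>_. borel) \<Otimes>\<^sub>M PiM B (\<lambda>_. borel))"
    using mA mB by (rule measurable_Pair)
  have h: "(\<lambda>(x, y). (f x, g y)) \<in> measurable (PiM A (\<lambda>_. borel) \<Otimes>\<^sub>M PiM B (\<lambda>_. borel)) (S \<Otimes>\<^sub>M T)"
    using f g by measurable
  have "distr M (S \<Otimes>\<^sub>M T) (\<lambda>\<omega>. (f (rr A \<omega>), g (rr B \<omega>))) =
      distr (distr M (PiM A (\<lambda>_. borel) \<Otimes>\<^sub>M PiM B (\<lambda>_. borel)) (\<lambda>\<omega>. (rr A \<omega>, rr B \<omega>))) (S \<Otimes>\<^sub>M T) (\<lambda>(x, y). (f x, g y))"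
    by (subst distr_distr[OF h pm]) (simp add: comp_def)
  also have "\<dots> = distr (distr M (PiM A (\<lambda>_. borel)) (rr A) \<Otimes>\<^sub>M distr M (PiM B (\<lambda>_. borel)) (rr B)) (S \<Otimes>\<^sub>M T) (\<lambda>(x, y). (f x, g y))"
    unfolding D ..
  also have "\<dots> = distr (distr M (PiM A (\<lambda>_. borel)) (rr A)) S f \<Otimes>\<^sub>M distr (distr M (PiM B (\<lambda>_. borel)) (rr B)) T g"
  proof (rule pair_measure_distr[symmetric])
    show "f \<in> measurable (distr M (PiM A (\<lambda>_. borel)) (rr A)) S" using f by simp
    show "g \<in> measurable (distr M (PiM B (\<lambda>_. borel)) (rr B)) T" using g by simp
    show "sigma_finite_measure (distr (distr M (PiM B (\<lambda>_. borel)) (rr B)) T g)"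
    proof (intro prob_space_imp_sigma_finite prob_space.prob_space_distr P.prob_space_distr mB)
      show "g \<in> measurable (distr M (PiM B (\<lambda>_. borel)) (rr B)) T" using g by simp
    qed (rule Mprob)
  qed
  also have "\<dots> = distr M S (\<lambda>\<omega>. f (rr A \<omega>)) \<Otimes>\<^sub>M distr M T (\<lambda>\<omega>. g (rr B \<omega>))"
    using distr_distr[OF f mA] distr_distr[OF g mB] by (simp add: comp_def)
  finally show ?thesis .
qed

definition mu :: "real measure" where "mu = distr M borel X"
definition nu :: "real measure" where "nu = distr M borel W"
definition lawY :: "real measure" where "lawY = distr M borel Y"
definition Q :: "(real \<times> real) measure" where "Q = distr M (borel \<Otimes>\<^sub>M borel) (\<lambda>\<omega>. (Y \<omega>, X \<omega>))"

lemma mu_prob: "prob_space mu" unfolding mu_def using rv by (intro P.prob_space_distr) auto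
lemma nu_prob: "prob_space nu" unfolding nu_def using rv by (intro P.prob_space_distr) auto
lemma lawY_prob: "prob_space lawY" unfolding lawY_def using rv by (intro P.prob_space_distr) auto
lemma Q_prob: "prob_space Q" unfolding Q_def using rv by (intro P.prob_space_distr) auto
lemma sets_mu[simp]: "sets mu = sets borel" unfolding mu_def by simp
lemma sets_nu[simp]: "sets nu = sets borel" unfolding nu_def by simp
lemma sets_lawY[simp]: "sets lawY = sets borel" unfolding lawY_def by simp
lemma sets_Q[simp]: "sets Q = sets (borel \<Otimes>\<^sub>M borel)" unfolding Q_def by simp

lemma rr_simps: "rr {1} \<omega> 1 = Y \<omega>" "rr {0} \<omega> 0 = X \<omega>" "rr {2} \<omega> 2 = W \<omega>"
  "rr {1, 0} \<omega> 1 = Y \<omega>" "rr {1, 0} \<omega> 0 = X \<omega>" "rr {3} \<omega> 3 = E \<omega>"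
  "rr {2, 0} \<omega> 2 = W \<omega>" "rr {2, 0} \<omega> 0 = X \<omega>"
  by (simp_all add: rr_app numeral_eq_Suc)

lemma Q_eq: "Q = lawY \<Otimes>\<^sub>M mu"
proof -
  have "distr M (borel \<Otimes>\<^sub>M borel) (\<lambda>\<omega>. ((\<lambda>u. u 1) (rr {1} \<omega>), (\<lambda>u. u 0) (rr {0} \<omega>))) =
      distr M borel (\<lambda>\<omega>. (\<lambda>u. u 1) (rr {1} \<omega>)) \<Otimes>\<^sub>M distr M borel (\<lambda>\<omega>. (\<lambda>u. u 0) (rr {0} \<omega>))"
    by (rule joint_law) (auto intro: measurable_component_singleton)
  then show ?thesis unfolding Q_def lawY_def mu_def by (simp add: rr_app)
qed

lemma joint_WYX: "distr M (borel \<Otimes>\<^sub>M (borel \<Otimes>\<^sub>M borel)) (\<lambda>\<omega>. (W \<omega>, (Y \<omega>, X \<omega>))) = nu \<Otimes>\<^sub>M Q"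
proof -
  have m: "(\<lambda>u. (u 1, u 0)) \<in> measurable (PiM {1, 0} (\<lambda>_. borel)) (borel \<Otimes>\<^sub>M borel)"
    by (intro measurable_Pair measurable_component_singleton) auto
  have "distr M (borel \<Otimes>\<^sub>M (borel \<Otimes>\<^sub>M borel)) (\<lambda>\<omega>. ((\<lambda>u. u 2) (rr {2} \<omega>), (\<lambda>u. (u 1, u 0)) (rr {1, 0} \<omega>))) =
      distr M borel (\<lambda>\<omega>. (\<lambda>u. u 2) (rr {2} \<omega>)) \<Otimes>\<^sub>M distr M (borel \<Otimes>\<^sub>M borel) (\<lambda>\<omega>. (\<lambda>u. (u 1, u 0)) (rr {1, 0} \<omega>))"
    by (rule joint_law[OF _ _ _ _ m]) (auto intro: measurable_component_singleton)
  then show ?thesis unfolding Q_def nu_def by (simp add: rr_app)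
qed

sublocale A: tailS mu \<gamma>
  by (intro tailS.intro tailS_axioms.intro mu_prob) (simp_all add: gamma classS[folded mu_def])

lemma phi_eq: "A.phi = (\<integral>\<omega>. exp (\<gamma> * X \<omega>) \<partial>M)"
  unfolding A.phi_def unfolding mu_def by (subst integral_distr) (auto simp: rv)

lemma measure_times:
  assumes "prob_space A" "prob_space B" "S \<in> sets A" "T \<in> sets B"
  shows "measure (A \<Otimes>\<^sub>M B) (S \<times> T) = measure A S * measure B T"
proof -
  interpret b: prob_space B by fact
  have "emeasure (A \<Otimes>\<^sub>M B) (S \<times> T) = emeasure A S * emeasure B T"
    using assms(3,4) by (rule b.emeasure_pair_measure_Times)
  then show ?thesis by (simp add: measure_def enn2real_mult)
qed

lemma spY[simp]: "space lawY = UNIV" unfolding lawY_def by simp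
lemma spmu[simp]: "space mu = UNIV" unfolding mu_def by simp
lemma spnu[simp]: "space nu = UNIV" unfolding nu_def by simp

lemma lawY_1: "measure lawY {1} = p"
  unfolding lawY_def using rv Y1 by (subst measure_distr) (auto simp: vimage_def Collect_conj_eq Int_commute)

lemma lawY_m1: "measure lawY {-1} = 1 - p"
  unfolding lawY_def using rv Ym1 by (subst measure_distr) (auto simp: vimage_def Collect_conj_eq Int_commute)

lemma lawY_other: "measure lawY (- {1, -1}) = 0"
proof -
  interpret y: prob_space lawY by (rule lawY_prob)
  have "measure lawY {1, -1} = measure lawY {1} + measure lawY {-1}"
    by (subst y.finite_measure_Union[symmetric]) (auto intro!: arg_cong[where f="measure lawY"])
  then have "measure lawY {1, -1} = 1" using lawY_1 lawY_m1 by simp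
  then show ?thesis using y.prob_compl[of "{1, -1}"] by (simp add: Compl_eq_Diff_UNIV)
qed

definition fT :: "real \<times> (real \<times> real) \<Rightarrow> real" where
  "fT z = max 0 (fst (snd z) * max 0 (fst z) + snd (snd z))"

lemma fT_meas[measurable]: "fT \<in> borel_measurable (borel \<Otimes>\<^sub>M (borel \<Otimes>\<^sub>M borel))"
  unfolding fT_def by measurable

definition Top :: "real measure \<Rightarrow> real measure" where
  "Top \<rho> = distr (\<rho> \<Otimes>\<^sub>M Q) borel fT"

lemma fT_meas':
  assumes "sets \<rho> = sets borel"
  shows "fT \<in> borel_measurable (\<rho> \<Otimes>\<^sub>M Q)"
proof -
  have "sets (\<rho> \<Otimes>\<^sub>M Q) = sets (borel \<Otimes>\<^sub>M (borel \<Otimes>\<^sub>M borel))"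
    using assms by (intro sets_pair_measure_cong) simp_all
  then show ?thesis using measurable_cong_sets fT_meas by blast
qed

lemma Top_prob:
  assumes "prob_space \<rho>" "sets \<rho> = sets borel"
  shows "prob_space (Top \<rho>)" "sets (Top \<rho>) = sets borel"
proof -
  interpret rq: prob_space "\<rho> \<Otimes>\<^sub>M Q" by (rule prob_space_pair[OF assms(1) Q_prob])
  show "prob_space (Top \<rho>)" unfolding Top_def by (rule rq.prob_space_distr[OF fT_meas'[OF assms(2)]])
  show "sets (Top \<rho>) = sets borel" unfolding Top_def by simp
qed

lemma W_nonneg: "AE \<omega> in M. 0 \<le> W \<omega>"
proof -
  have "measure M {\<omega> \<in> space M. W \<omega> < 0} = measure nu {..<0}"
    unfolding nu_def using rv by (subst measure_distr) (auto simp: vimage_def Int_def conj_commute)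
  also have "\<dots> = measure (distr M borel (\<lambda>\<omega>. max 0 (Y \<omega> * W \<omega> + X \<omega>))) {..<0}"
    unfolding nu_def stat ..
  also have "\<dots> = measure M {\<omega> \<in> space M. max 0 (Y \<omega> * W \<omega> + X \<omega>) < 0}"
    using rv by (subst measure_distr) (auto simp: vimage_def Int_def)
  also have "\<dots> = 0" by simp
  finally have z: "measure M {\<omega> \<in> space M. W \<omega> < 0} = 0" .
  have "AE \<omega> in M. \<omega> \<notin> {\<omega> \<in> space M. W \<omega> < 0}"
    using z rv by (intro AE_not_in) (simp add: null_sets_def P.emeasure_eq_measure)
  moreover have "AE \<omega> in M. \<omega> \<in> space M" by (rule AE_space)
  ultimately show ?thesis by eventually_elim auto
qed

lemma nu_nonneg: "AE w in nu. 0 \<le> w"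
  unfolding nu_def using W_nonneg rv by (subst AE_distr_iff) auto

lemma nu_fix: "Top nu = nu"
proof -
  have pm: "(\<lambda>\<omega>. (W \<omega>, (Y \<omega>, X \<omega>))) \<in> measurable M (borel \<Otimes>\<^sub>M (borel \<Otimes>\<^sub>M borel))"
    using rv by measurable
  have "nu = distr M borel (\<lambda>\<omega>. max 0 (Y \<omega> * W \<omega> + X \<omega>))" unfolding nu_def stat ..
  also have "\<dots> = distr M borel (\<lambda>\<omega>. fT (W \<omega>, (Y \<omega>, X \<omega>)))"
    using W_nonneg rv by (intro distr_cong_AE) (auto simp: fT_def elim!: eventually_mono)
  also have "\<dots> = distr (distr M (borel \<Otimes>\<^sub>M (borel \<Otimes>\<^sub>M borel)) (\<lambda>\<omega>. (W \<omega>, (Y \<omega>, X \<omega>)))) borel fT"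
    by (subst distr_distr[OF fT_meas pm]) (simp add: comp_def)
  also have "\<dots> = Top nu" unfolding joint_WYX Top_def
    by (intro distr_cong) (simp_all add: sets_pair_measure_cong)
  finally show ?thesis ..
qed

lemma Q_slice:
  assumes x: "0 \<le> x" and m: "0 \<le> m"
  shows "measure Q {yt. x < max 0 (fst yt * m + snd yt)} = p * A.G (x - m) + (1 - p) * A.G (x + m)"
proof -
  interpret q: prob_space Q by (rule Q_prob)
  define Z where "Z = {yt::real\<times>real. x < max 0 (fst yt * m + snd yt)}"
  define Z1 where "Z1 = {1::real} \<times> {x - m<..}"
  define Z2 where "Z2 = {-1::real} \<times> {x + m<..}"
  define Z3 where "Z3 = Z \<inter> ((- {1, -1}) \<times> UNIV)"
  have mZ: "Z \<in> sets Q" unfolding Z_def sets_Q by (rule coll_borel2) measurable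
  have mZ3: "Z3 \<in> sets Q" unfolding Z3_def using mZ by (intro sets.Int) (auto simp: sets_Q)
  have mZ1: "Z1 \<in> sets Q" unfolding Z1_def by (simp add: sets_Q)
  have mZ2: "Z2 \<in> sets Q" unfolding Z2_def by (simp add: sets_Q)
  have un: "Z = Z1 \<union> (Z2 \<union> Z3)"
    unfolding Z_def Z1_def Z2_def Z3_def using x by (auto simp: max_def split: if_splits)
  have "measure Q Z3 \<le> measure Q ((- {1, -1}) \<times> UNIV)"
    unfolding Z3_def by (intro q.finite_measure_mono) (auto simp: sets_Q)
  also have "\<dots> = measure lawY (- {1, -1}) * measure mu UNIV"
    unfolding Q_eq by (rule measure_times[OF lawY_prob mu_prob]) auto
  also have "\<dots> = 0" using lawY_other by simp
  finally have z3: "measure Q Z3 = 0" by (simp add: measure_nonneg antisym)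
  have z1: "measure Q Z1 = p * A.G (x - m)"
    unfolding Z1_def Q_eq by (subst measure_times[OF lawY_prob mu_prob]) (auto simp: lawY_1 A.G_def)
  have z2: "measure Q Z2 = (1 - p) * A.G (x + m)"
    unfolding Z2_def Q_eq by (subst measure_times[OF lawY_prob mu_prob]) (auto simp: lawY_m1 A.G_def)
  have d: "Z2 \<inter> Z3 = {}" "Z1 \<inter> (Z2 \<union> Z3) = {}" unfolding Z1_def Z2_def Z3_def by auto
  have "measure Q Z = measure Q Z1 + (measure Q Z2 + measure Q Z3)"
    unfolding un using mZ1 mZ2 mZ3 d
    by (simp add: q.finite_measure_Union)
  then show ?thesis using z1 z2 z3 unfolding Z_def by simp
qed

lemma sets_rQ:
  assumes "sets \<rho> = sets borel"
  shows "sets (\<rho> \<Otimes>\<^sub>M Q) = sets (borel \<Otimes>\<^sub>M (borel \<Otimes>\<^sub>M borel))"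
  using assms by (intro sets_pair_measure_cong) simp_all

lemma space_rQ:
  assumes "sets \<rho> = sets borel"
  shows "space (\<rho> \<Otimes>\<^sub>M Q) = UNIV"
  using sets_eq_imp_space_eq[OF sets_rQ[OF assms]] by (simp add: space_pair_measure)

lemma T_tail:
  assumes r: "prob_space \<rho>" "sets \<rho> = sets borel" and x: "0 \<le> x"
  shows "measure (Top \<rho>) {w. x < max 0 w} = p * (\<integral>w. A.G (x - max 0 w) \<partial>\<rho>) + (1 - p) * (\<integral>w. A.G (x + max 0 w) \<partial>\<rho>)"
proof -
  interpret rr: prob_space \<rho> by fact
  have spr: "space \<rho> = UNIV" using sets_eq_imp_space_eq[OF r(2)] by simp
  have mc: "borel_measurable \<rho> = borel_measurable borel" by (rule measurable_cong_sets[OF r(2) refl])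
  define S where "S = {z. x < fT z}"
  have mS: "S \<in> sets (\<rho> \<Otimes>\<^sub>M Q)"
  proof -
    have "S = fT -` {x<..} \<inter> space (\<rho> \<Otimes>\<^sub>M Q)" unfolding S_def space_rQ[OF r(2)] by auto
    then show ?thesis using measurable_sets[OF fT_meas'[OF r(2)], of "{x<..}"] by simp
  qed
  have "measure (Top \<rho>) {w. x < max 0 w} = measure (\<rho> \<Otimes>\<^sub>M Q) (fT -` {w. x < max 0 w} \<inter> space (\<rho> \<Otimes>\<^sub>M Q))"
    unfolding Top_def by (rule measure_distr[OF fT_meas'[OF r(2)]]) measurable
  also have "fT -` {w. x < max 0 w} \<inter> space (\<rho> \<Otimes>\<^sub>M Q) = S"
    unfolding S_def space_rQ[OF r(2)] by (auto simp: fT_def)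
  also have "measure (\<rho> \<Otimes>\<^sub>M Q) S = (\<integral>w. measure Q (Pair w -` S) \<partial>\<rho>)"
    by (rule gfub1(1)[OF r(1) Q_prob mS])
  also have "\<dots> = (\<integral>w. p * A.G (x - max 0 w) + (1 - p) * A.G (x + max 0 w) \<partial>\<rho>)"
  proof (intro Bochner_Integration.integral_cong refl)
    fix w
    have "Pair w -` S = {yt. x < max 0 (fst yt * max 0 w + snd yt)}"
      unfolding S_def fT_def by auto
    then show "measure Q (Pair w -` S) = p * A.G (x - max 0 w) + (1 - p) * A.G (x + max 0 w)"
      using Q_slice[OF x, of "max 0 w"] by simp
  qed
  also have "\<dots> = p * (\<integral>w. A.G (x - max 0 w) \<partial>\<rho>) + (1 - p) * (\<integral>w. A.G (x + max 0 w) \<partial>\<rho>)"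
  proof -
    have i1: "integrable \<rho> (\<lambda>w. A.G (x - max 0 w))"
      by (rule rr.integrable_const_bound[where B=1]) (auto simp: mc A.G_nonneg A.G_le1)
    have i2: "integrable \<rho> (\<lambda>w. A.G (x + max 0 w))"
      by (rule rr.integrable_const_bound[where B=1]) (auto simp: mc A.G_nonneg A.G_le1)
    show ?thesis using i1 i2 by simp
  qed
  finally show ?thesis .
qed

definition S0 :: "(real \<times> real) set" where "S0 = {z. fst z = -1 \<and> snd z \<le> 0}"
definition q :: real where "q = measure Q S0"
definition Rg :: "(real \<Rightarrow> real) \<Rightarrow> real \<Rightarrow> real" where
  "Rg g w = (\<integral>z. indicator (- S0) z * g (fT (w, z)) \<partial>Q)"

lemma spQ[simp]: "space Q = UNIV" unfolding Q_def by (simp add: space_pair_measure)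

lemma S0_meas: "S0 \<in> sets Q"
  unfolding S0_def sets_Q by (rule coll_borel2) measurable

lemma S0c_meas: "- S0 \<in> sets Q"
  by (metis Compl_eq_Diff_UNIV S0_meas sets.compl_sets spQ)

lemma q_eq: "q = (1 - p) * measure mu {..0}"
proof -
  have e: "S0 = {-1} \<times> {..0}" unfolding S0_def by auto
  show ?thesis unfolding q_def Q_eq e
    by (simp add: measure_times[OF lawY_prob mu_prob] lawY_m1)
qed

lemma q_pos: "0 < q"
proof -
  have "measure M {\<omega> \<in> space M. X \<omega> < 0} = measure mu {..<0}"
    unfolding mu_def using rv by (subst measure_distr) (auto simp: vimage_def Int_def conj_commute)
  also have "\<dots> \<le> measure mu {..0}"
    by (intro A.m.finite_measure_mono) auto
  finally have "0 < measure mu {..0}" using neg by simp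
  then show ?thesis unfolding q_eq using p1 by simp
qed

lemma q_le1: "q \<le> 1"
  unfolding q_def using Q_prob by (simp add: prob_space.prob_le_1)

lemma gQ_meas:
  fixes g :: "real \<Rightarrow> real"
  assumes g: "g \<in> borel_measurable borel"
  shows "(\<lambda>z. g (fT (w, z))) \<in> borel_measurable Q"
proof -
  have "(\<lambda>z. g (fT (w, z))) \<in> borel_measurable (borel \<Otimes>\<^sub>M borel)" using g by measurable
  then show ?thesis using measurable_cong_sets[OF sets_Q refl] by blast
qed

lemma ind_g_int:
  fixes g :: "real \<Rightarrow> real"
  assumes g: "g \<in> borel_measurable borel" and gb: "\<And>v. 0 \<le> g v" "\<And>v. g v \<le> Bd"
  shows "integrable Q (\<lambda>z. indicator (- S0) z * g (fT (w, z)))"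
proof -
  interpret qq: prob_space Q by (rule Q_prob)
  have m: "(\<lambda>z. indicator (- S0) z * g (fT (w, z))) \<in> borel_measurable Q"
  proof (rule borel_measurable_times)
    show "(\<lambda>z. g (fT (w, z))) \<in> borel_measurable Q" by (rule gQ_meas[OF g])
    show "indicator (- S0) \<in> borel_measurable Q" by (rule borel_measurable_indicator[OF S0c_meas])
  qed
  have "0 \<le> Bd" using gb(1)[of 0] gb(2)[of 0] by simp
  then show ?thesis
    by (intro qq.integrable_const_bound[where B=Bd] m AE_I2) (use gb in \<open>auto simp: indicator_def abs_of_nonneg\<close>)
qed

lemma Kg_split:
  fixes g :: "real \<Rightarrow> real"
  assumes g: "g \<in> borel_measurable borel" and gb: "\<And>v. 0 \<le> g v" "\<And>v. g v \<le> Bd"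
  shows "(\<integral>z. g (fT (w, z)) \<partial>Q) = g 0 * q + Rg g w"
proof -
  interpret qq: prob_space Q by (rule Q_prob)
  have "(\<integral>z. g (fT (w, z)) \<partial>Q) = (\<integral>z. indicator S0 z * g 0 + indicator (- S0) z * g (fT (w, z)) \<partial>Q)"
  proof (intro Bochner_Integration.integral_cong refl)
    fix z
    show "g (fT (w, z)) = indicator S0 z * g 0 + indicator (- S0) z * g (fT (w, z))"
    proof (cases "z \<in> S0")
      case True
      then have "fT (w, z) = 0" unfolding S0_def fT_def by (auto simp: max_def)
      then show ?thesis using True by simp
    qed simp
  qed
  also have "\<dots> = (\<integral>z. indicator S0 z * g 0 \<partial>Q) + Rg g w"
    unfolding Rg_def
  proof (rule Bochner_Integration.integral_add)
    show "integrable Q (\<lambda>z. indicator S0 z * g 0)"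
      using integrable_real_mult_indicator[OF S0_meas, of "\<lambda>_. g 0"] by (simp add: mult.commute)
    show "integrable Q (\<lambda>z. indicator (- S0) z * g (fT (w, z)))"
      by (rule ind_g_int[OF g gb])
  qed
  also have "(\<integral>z. indicator S0 z * g 0 \<partial>Q) = g 0 * q"
    unfolding q_def using S0_meas by simp
  finally show ?thesis .
qed

lemma Rg_bounds:
  fixes g :: "real \<Rightarrow> real"
  assumes g: "g \<in> borel_measurable borel" and gb: "\<And>v. 0 \<le> g v" "\<And>v. g v \<le> Bd"
  shows "0 \<le> Rg g w" "Rg g w \<le> Bd * (1 - q)"
proof -
  interpret qq: prob_space Q by (rule Q_prob)
  show "0 \<le> Rg g w" unfolding Rg_def using gb by (intro integral_nonneg_AE AE_I2) (simp add: indicator_def)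
  have "Rg g w \<le> (\<integral>z. indicator (- S0) z * Bd \<partial>Q)"
    unfolding Rg_def
  proof (rule integral_mono)
    show "integrable Q (\<lambda>z. indicator (- S0) z * g (fT (w, z)))"
      by (rule ind_g_int[OF g gb])
    show "integrable Q (\<lambda>z. indicator (- S0) z * Bd)"
      using integrable_real_mult_indicator[of "- S0" Q "\<lambda>_. Bd"] S0c_meas by (simp add: mult.commute)
  qed (use gb in \<open>auto simp: indicator_def\<close>)
  also have "\<dots> = Bd * measure Q (- S0)" using S0c_meas by simp
  also have "measure Q (- S0) = 1 - q"
    unfolding q_def using qq.prob_compl[OF S0_meas] by (simp add: Compl_eq_Diff_UNIV)
  finally show "Rg g w \<le> Bd * (1 - q)" .
qed

lemma Rg_meas:
  fixes g :: "real \<Rightarrow> real"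
  assumes g: "g \<in> borel_measurable borel"
  shows "Rg g \<in> borel_measurable borel"
proof -
  interpret qq: prob_space Q by (rule Q_prob)
  have "(\<lambda>(w, z). indicator (- S0) z * g (fT (w, z))) \<in> borel_measurable (borel \<Otimes>\<^sub>M (borel \<Otimes>\<^sub>M borel))"
    using g S0_meas by (simp add: sets_Q) measurable
  then have "(\<lambda>(w, z). indicator (- S0) z * g (fT (w, z))) \<in> borel_measurable (borel \<Otimes>\<^sub>M Q)"
    using measurable_cong_sets[OF sets_pair_measure_cong[OF refl sets_Q] refl] by blast
  then show ?thesis unfolding Rg_def[abs_def]
    by (rule qq.borel_measurable_lebesgue_integral)
qed

lemma T_int:
  fixes g :: "real \<Rightarrow> real"
  assumes r: "prob_space \<rho>" "sets \<rho> = sets borel"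
    and g: "g \<in> borel_measurable borel" and gb: "\<And>v. 0 \<le> g v" "\<And>v. g v \<le> Bd"
  shows "(\<integral>v. g v \<partial>Top \<rho>) = g 0 * q + (\<integral>w. Rg g w \<partial>\<rho>)"
proof -
  interpret rr: prob_space \<rho> by fact
  interpret qq: prob_space Q by (rule Q_prob)
  interpret pq: pair_sigma_finite \<rho> Q
    by (intro pair_sigma_finite.intro prob_space_imp_sigma_finite r(1) Q_prob)
  interpret rq: prob_space "\<rho> \<Otimes>\<^sub>M Q" by (rule prob_space_pair[OF r(1) Q_prob])
  have mc: "borel_measurable \<rho> = borel_measurable borel" by (rule measurable_cong_sets[OF r(2) refl])
  have "(\<integral>v. g v \<partial>Top \<rho>) = (\<integral>z. g (fT z) \<partial>(\<rho> \<Otimes>\<^sub>M Q))"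
    unfolding Top_def by (rule integral_distr[OF fT_meas'[OF r(2)] g])
  also have "\<dots> = (\<integral>w. \<integral>z. g (fT (w, z)) \<partial>Q \<partial>\<rho>)"
  proof (rule pq.integral_fst'[symmetric])
    show "integrable (\<rho> \<Otimes>\<^sub>M Q) (\<lambda>z. g (fT z))"
      by (rule rq.integrable_const_bound[where B=Bd])
         (use gb measurable_compose[OF fT_meas'[OF r(2)] g] in \<open>auto simp: abs_of_nonneg\<close>)
  qed
  also have "\<dots> = (\<integral>w. g 0 * q + Rg g w \<partial>\<rho>)"
    by (intro Bochner_Integration.integral_cong refl Kg_split[OF g gb])
  also have "\<dots> = g 0 * q + (\<integral>w. Rg g w \<partial>\<rho>)"
  proof -
    have "integrable \<rho> (Rg g)"
      by (rule rr.integrable_const_bound[where B="Bd * (1 - q)"])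
         (use Rg_bounds[OF g gb] Rg_meas[OF g] in \<open>auto simp: mc\<close>)
    then show ?thesis by (simp add: rr.prob_space)
  qed
  finally show ?thesis .
qed

lemma contraction:
  fixes g :: "real \<Rightarrow> real"
  assumes r1: "prob_space \<rho>1" "sets \<rho>1 = sets borel" and r2: "prob_space \<rho>2" "sets \<rho>2 = sets borel"
    and IH: "\<And>Bb h. h \<in> borel_measurable borel \<Longrightarrow> (\<And>v. 0 \<le> h v) \<Longrightarrow> (\<And>v. h v \<le> Bb) \<Longrightarrow>
              \<bar>(\<integral>v. h v \<partial>\<rho>1) - (\<integral>v. h v \<partial>\<rho>2)\<bar> \<le> Bb * c"
    and g: "g \<in> borel_measurable borel" and gb: "\<And>v. 0 \<le> g v" "\<And>v. g v \<le> Bd"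
  shows "\<bar>(\<integral>v. g v \<partial>Top \<rho>1) - (\<integral>v. g v \<partial>Top \<rho>2)\<bar> \<le> Bd * (1 - q) * c"
proof -
  have "(\<integral>v. g v \<partial>Top \<rho>1) - (\<integral>v. g v \<partial>Top \<rho>2) = (\<integral>w. Rg g w \<partial>\<rho>1) - (\<integral>w. Rg g w \<partial>\<rho>2)"
    using T_int[OF r1 g gb] T_int[OF r2 g gb] by simp
  also have "\<bar>\<dots>\<bar> \<le> (Bd * (1 - q)) * c"
    by (rule IH[OF Rg_meas[OF g]]) (use Rg_bounds[OF g gb] in auto)
  finally show ?thesis .
qed

definition nus :: "nat \<Rightarrow> real measure" where "nus n = (Top ^^ n) (return borel 0)"

lemma nus_prob: "prob_space (nus n) \<and> sets (nus n) = sets borel"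
proof (induction n)
  case 0 then show ?case unfolding nus_def by (auto intro: prob_space_return)
next
  case (Suc n) then show ?case unfolding nus_def using Top_prob by simp
qed

lemma nus_Suc: "nus (Suc n) = Top (nus n)" unfolding nus_def by simp

lemma int_bounds:
  fixes h :: "real \<Rightarrow> real"
  assumes "prob_space \<rho>" "sets \<rho> = sets borel" "h \<in> borel_measurable borel" "\<And>v. 0 \<le> h v" "\<And>v. h v \<le> Bb"
  shows "0 \<le> (\<integral>v. h v \<partial>\<rho>)" "(\<integral>v. h v \<partial>\<rho>) \<le> Bb"
proof -
  interpret rr: prob_space \<rho> by fact
  have mc: "borel_measurable \<rho> = borel_measurable borel" by (rule measurable_cong_sets[OF assms(2) refl])
  show "0 \<le> (\<integral>v. h v \<partial>\<rho>)" using assms(4) by (intro integral_nonneg_AE AE_I2) auto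
  have "integrable \<rho> h"
    by (rule rr.integrable_const_bound[where B=Bb]) (use assms(3-5) in \<open>auto simp: mc abs_of_nonneg\<close>)
  then show "(\<integral>v. h v \<partial>\<rho>) \<le> Bb" using assms(5) by (intro rr.integral_le_const AE_I2) auto
qed

lemma TV:
  fixes h :: "real \<Rightarrow> real"
  shows "h \<in> borel_measurable borel \<Longrightarrow> (\<And>v. 0 \<le> h v) \<Longrightarrow> (\<And>v. h v \<le> Bb) \<Longrightarrow>
    \<bar>(\<integral>v. h v \<partial>nus n) - (\<integral>v. h v \<partial>nu)\<bar> \<le> Bb * (1 - q) ^ n"
proof (induction n arbitrary: Bb h)
  case 0
  have "0 \<le> (\<integral>v. h v \<partial>nus 0)" "(\<integral>v. h v \<partial>nus 0) \<le> Bb"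
    using int_bounds[of "nus 0" h Bb] nus_prob 0 by auto
  moreover have "0 \<le> (\<integral>v. h v \<partial>nu)" "(\<integral>v. h v \<partial>nu) \<le> Bb"
    using int_bounds[of nu h Bb] nu_prob 0 by auto
  ultimately show ?case by simp
next
  case (Suc n)
  have "\<bar>(\<integral>v. h v \<partial>Top (nus n)) - (\<integral>v. h v \<partial>Top nu)\<bar> \<le> Bb * (1 - q) * (1 - q) ^ n"
    by (rule contraction[OF _ _ nu_prob sets_nu Suc.IH Suc.prems]) (use nus_prob in auto)
  then show ?case unfolding nus_Suc nu_fix by (simp add: algebra_simps)
qed

lemma pphi': "p * A.phi < 1" using phiM phi_eq by simp

lemma shifted_tail:
  assumes r: "prob_space \<rho>" "sets \<rho> = sets borel"
  shows "(\<integral>w. A.G (x - max 0 w) \<partial>\<rho>) = measure (distr \<rho> borel (max 0) \<Otimes>\<^sub>M mu) {(w,t). x < w + t}"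
    and "measure (distr \<rho> borel (max 0)) {u<..} = measure \<rho> {w. u < max 0 w}"
    and "prob_space (distr \<rho> borel (max 0))" "sets (distr \<rho> borel (max 0)) = sets borel"
proof -
  interpret rr: prob_space \<rho> by fact
  have mm0: "(\<lambda>w::real. max 0 w) \<in> borel_measurable borel" by measurable
  have mm: "max 0 \<in> borel_measurable \<rho>"
    by (subst measurable_cong_sets[OF r(2) refl]) (rule mm0)
  show pr: "prob_space (distr \<rho> borel (max 0))" by (rule rr.prob_space_distr[OF mm])
  show sr: "sets (distr \<rho> borel (max 0)) = sets borel" by simp
  have "(\<integral>w. A.G (x - max 0 w) \<partial>\<rho>) = (\<integral>w. A.G (x - w) \<partial>distr \<rho> borel (max 0))"
    by (rule integral_distr[symmetric, OF mm]) measurable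
  also have "\<dots> = (\<integral>w. measure mu (Pair w -` {(w,t). x < w + t}) \<partial>distr \<rho> borel (max 0))"
  proof (intro Bochner_Integration.integral_cong refl)
    fix w
    have "Pair w -` {(w,t). x < w + t} = {x - w<..}" by auto
    then show "A.G (x - w) = measure mu (Pair w -` {(w,t). x < w + t})" by (simp add: A.G_def)
  qed
  also have "\<dots> = measure (distr \<rho> borel (max 0) \<Otimes>\<^sub>M mu) {(w,t). x < w + t}"
    by (rule pair_measure_fubini1[symmetric, OF pr mu_prob sr sets_mu]) (simp add: case_prod_unfold coll_borel2)
  finally show "(\<integral>w. A.G (x - max 0 w) \<partial>\<rho>) = measure (distr \<rho> borel (max 0) \<Otimes>\<^sub>M mu) {(w,t). x < w + t}" .
  show "measure (distr \<rho> borel (max 0)) {u<..} = measure \<rho> {w. u < max 0 w}"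
    using sets_eq_imp_space_eq[OF r(2)] by (subst measure_distr[OF mm]) (auto simp: vimage_def)
qed

lemma nus_bound:
  obtains \<alpha> where "0 \<le> \<alpha>" "\<And>n s. measure (nus n) {w. s < max 0 w} \<le> \<alpha> * A.G s"
proof -
  obtain \<theta> K x0 where th: "0 \<le> \<theta>" "p * \<theta> < 1" "0 \<le> K" "0 \<le> x0"
    and kes: "\<And>\<rho> \<alpha> x. prob_space \<rho> \<Longrightarrow> sets \<rho> = sets borel \<Longrightarrow> 0 \<le> \<alpha> \<Longrightarrow>
       (\<And>s. measure \<rho> {s<..} \<le> \<alpha> * A.G s) \<Longrightarrow> x0 \<le> x \<Longrightarrow>
       measure (\<rho> \<Otimes>\<^sub>M mu) {(w,t). x < w + t} \<le> (\<theta> * \<alpha> + K) * A.G x"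
    using A.kesten[OF p0 pphi'] by blast
  define \<alpha> where "\<alpha> = max (1 / A.G x0) ((p * K + (1 - p)) / (1 - p * \<theta>))"
  have Gx0: "0 < A.G x0" by (rule A.G_pos)
  have a1: "1 \<le> \<alpha> * A.G x0"
  proof -
    have "1 / A.G x0 \<le> \<alpha>" unfolding \<alpha>_def by simp
    then show ?thesis using Gx0 by (simp add: pos_divide_le_eq)
  qed
  have a0: "0 \<le> \<alpha>" unfolding \<alpha>_def using Gx0 by (simp add: le_max_iff_disj)
  have a2: "p * K + (1 - p) \<le> \<alpha> * (1 - p * \<theta>)"
  proof -
    have "(p * K + (1 - p)) / (1 - p * \<theta>) \<le> \<alpha>" unfolding \<alpha>_def by simp
    moreover have "0 < 1 - p * \<theta>" using th(2) by simp
    ultimately show ?thesis by (simp add: pos_divide_le_eq)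
  qed
  have low: "measure \<rho> S \<le> \<alpha> * A.G s" if "prob_space \<rho>" "s < x0" for \<rho> S s
  proof -
    have "measure \<rho> S \<le> 1" using that(1) by (simp add: prob_space.prob_le_1)
    also have "1 \<le> \<alpha> * A.G x0" by (rule a1)
    also have "\<dots> \<le> \<alpha> * A.G s" using that(2) a0 by (intro mult_left_mono A.G_mono) auto
    finally show ?thesis .
  qed
  have "measure (nus n) {w. s < max 0 w} \<le> \<alpha> * A.G s" for n s
  proof (induction n arbitrary: s)
    case 0
    show ?case
    proof (cases "s < x0")
      case True then show ?thesis using low nus_prob by blast
    next
      case False
      then have "0 \<le> s" using th(4) by simp
      have ms: "{w::real. s < max 0 w} \<in> sets borel" by measurable
      have "measure (nus 0) {w. s < max 0 w} = 0"
        unfolding nus_def funpow_0 using \<open>0 \<le> s\<close> by (simp add: measure_return[OF ms])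
      then show ?thesis using a0 A.G_nonneg by simp
    qed
  next
    case (Suc n)
    show ?case
    proof (cases "s < x0")
      case True then show ?thesis using low nus_prob by blast
    next
      case False
      then have s: "0 \<le> s" "x0 \<le> s" using th(4) by auto
      have r: "prob_space (nus n)" "sets (nus n) = sets borel" using nus_prob by auto
      note st = shifted_tail[OF r]
      have b1: "(\<integral>w. A.G (s - max 0 w) \<partial>nus n) \<le> (\<theta> * \<alpha> + K) * A.G s"
        unfolding st(1)
        by (rule kes[OF st(3,4) a0 _ s(2)]) (use st(2) Suc.IH in simp)
      have b2: "(\<integral>w. A.G (s + max 0 w) \<partial>nus n) \<le> A.G s"
      proof -
        interpret rr: prob_space "nus n" by (rule r(1))
        have mc: "borel_measurable (nus n) = borel_measurable borel" by (rule measurable_cong_sets[OF r(2) refl])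
        have "integrable (nus n) (\<lambda>w. A.G (s + max 0 w))"
          by (rule rr.integrable_const_bound[where B=1]) (auto simp: mc A.G_nonneg A.G_le1)
        then show ?thesis by (intro rr.integral_le_const AE_I2) (auto intro: A.G_mono)
      qed
      have "measure (nus (Suc n)) {w. s < max 0 w} = p * (\<integral>w. A.G (s - max 0 w) \<partial>nus n) + (1 - p) * (\<integral>w. A.G (s + max 0 w) \<partial>nus n)"
        unfolding nus_Suc by (rule T_tail[OF r s(1)])
      also have "\<dots> \<le> p * ((\<theta> * \<alpha> + K) * A.G s) + (1 - p) * A.G s"
        using b1 b2 p0 p1 by (intro add_mono mult_left_mono) auto
      also have "\<dots> = (p * \<theta> * \<alpha> + (p * K + (1 - p))) * A.G s" by (simp add: algebra_simps)
      also have "\<dots> \<le> (p * \<theta> * \<alpha> + \<alpha> * (1 - p * \<theta>)) * A.G s"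
        using a2 A.G_nonneg by (intro mult_right_mono) auto
      also have "\<dots> = \<alpha> * A.G s" by (simp add: algebra_simps)
      finally show ?thesis .
    qed
  qed
  then show ?thesis using that a0 by blast
qed

lemma nu_bound:
  obtains \<alpha> where "0 \<le> \<alpha>" "\<And>s. measure nu {s<..} \<le> \<alpha> * A.G s"
proof -
  obtain \<alpha> where a0: "0 \<le> \<alpha>" and b: "\<And>n s. measure (nus n) {w. s < max 0 w} \<le> \<alpha> * A.G s"
    using nus_bound by blast
  have "measure nu {s<..} \<le> \<alpha> * A.G s" for s
  proof -
    define S where "S = {w::real. s < max 0 w}"
    have mS: "S \<in> sets borel" unfolding S_def by measurable
    have "measure nu S \<le> \<alpha> * A.G s + (1 - q) ^ n" for n
    proof -
      have "\<bar>(\<integral>v. indicator S v \<partial>nus n) - (\<integral>v. indicator S v \<partial>nu)\<bar> \<le> 1 * (1 - q) ^ n"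
        by (rule TV) (use mS in auto)
      moreover have "(\<integral>v. indicator S v \<partial>nus n) = measure (nus n) S"
        using nus_prob[of n] sets_eq_imp_space_eq[of "nus n" borel] by simp
      moreover have "(\<integral>v. indicator S v \<partial>nu) = measure nu S" by simp
      ultimately show ?thesis using b[of n s] unfolding S_def by simp
    qed
    moreover have "(\<lambda>n. \<alpha> * A.G s + (1 - q) ^ n) \<longlonglongrightarrow> \<alpha> * A.G s + 0"
      using q_pos q_le1 by (intro tendsto_add tendsto_const LIMSEQ_power_zero) auto
    ultimately have "measure nu S \<le> \<alpha> * A.G s"
      by (intro LIMSEQ_le_const[where X="\<lambda>n. \<alpha> * A.G s + (1 - q) ^ n"]) auto
    moreover have "measure nu {s<..} \<le> measure nu S"
    proof -
      interpret nn: prob_space nu by (rule nu_prob)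
      show ?thesis unfolding S_def by (intro nn.finite_measure_mono) auto
    qed
    ultimately show ?thesis by simp
  qed
  then show ?thesis using that a0 by blast
qed

lemma nu_eqn:
  assumes x: "0 \<le> x"
  shows "measure nu {x<..} = p * measure (nu \<Otimes>\<^sub>M mu) {(w,t). x < w + t} + (1 - p) * (\<integral>w. A.G (x + w) \<partial>nu)"
proof -
  have mc: "borel_measurable nu = borel_measurable borel" by (rule measurable_cong_sets[OF sets_nu refl])
  have "measure nu {x<..} = measure nu {w. x < max 0 w}"
    using x by (intro arg_cong[where f="measure nu"]) auto
  also have "\<dots> = p * (\<integral>w. A.G (x - max 0 w) \<partial>nu) + (1 - p) * (\<integral>w. A.G (x + max 0 w) \<partial>nu)"
    using T_tail[OF nu_prob sets_nu x] unfolding nu_fix .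
  also have "(\<integral>w. A.G (x - max 0 w) \<partial>nu) = (\<integral>w. A.G (x - w) \<partial>nu)"
    by (intro integral_cong_AE) (use nu_nonneg in \<open>auto simp: mc elim!: eventually_mono\<close>)
  also have "\<dots> = (\<integral>w. measure mu (Pair w -` {(w,t). x < w + t}) \<partial>nu)"
  proof (intro Bochner_Integration.integral_cong refl)
    fix w
    have "Pair w -` {(w,t). x < w + t} = {x - w<..}" by auto
    then show "A.G (x - w) = measure mu (Pair w -` {(w,t). x < w + t})" by (simp add: A.G_def)
  qed
  also have "\<dots> = measure (nu \<Otimes>\<^sub>M mu) {(w,t). x < w + t}"
    by (rule pair_measure_fubini1[symmetric, OF nu_prob mu_prob sets_nu sets_mu]) (simp add: case_prod_unfold coll_borel2)
  also have "(\<integral>w. A.G (x + max 0 w) \<partial>nu) = (\<integral>w. A.G (x + w) \<partial>nu)"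
    by (intro integral_cong_AE) (use nu_nonneg in \<open>auto simp: mc elim!: eventually_mono\<close>)
  finally show ?thesis .
qed

lemma nu_lim:
  shows "((\<lambda>x. measure nu {x<..} / A.G x) \<longlongrightarrow>
     (p * (\<integral>w. exp (\<gamma> * w) \<partial>nu) + (1 - p) * (\<integral>w. exp (- \<gamma> * w) \<partial>nu)) / (1 - p * A.phi)) at_top"
    and "0 < p \<Longrightarrow> integrable nu (\<lambda>w. exp (\<gamma> * w))"
proof -
  obtain \<alpha> where a0: "0 \<le> \<alpha>" and b: "\<And>s. measure nu {s<..} \<le> \<alpha> * A.G s"
    using nu_bound by blast
  interpret C: mainC mu \<gamma> nu p \<alpha>
  proof (intro mainC.intro mainC_axioms.intro)
    show "tailS mu \<gamma>" by (rule A.tailS_axioms)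
    show "prob_space nu" by (rule nu_prob)
    show "sets nu = sets borel" by simp
    show "AE w in nu. 0 \<le> w" by (rule nu_nonneg)
    show "0 \<le> p" "p < 1" "p * A.phi < 1" using p0 p1 pphi' by auto
    show "0 \<le> \<alpha>" by (rule a0)
    show "measure nu {s<..} \<le> \<alpha> * A.G s" for s by (rule b)
    show "measure nu {x<..} = p * measure (nu \<Otimes>\<^sub>M mu) {(w,t). x < w + t} + (1 - p) * (\<integral>w. A.G (x + w) \<partial>nu)"
      if "0 \<le> x" for x using nu_eqn[OF that] .
  qed
  show "((\<lambda>x. measure nu {x<..} / A.G x) \<longlongrightarrow>
     (p * (\<integral>w. exp (\<gamma> * w) \<partial>nu) + (1 - p) * (\<integral>w. exp (- \<gamma> * w) \<partial>nu)) / (1 - p * A.phi)) at_top"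
    using C.main_lim unfolding C.r_def C.F_def C.C0_def C.a_def C.b_def .
  show "0 < p \<Longrightarrow> integrable nu (\<lambda>w. exp (\<gamma> * w))" by (rule C.int_a)
qed

definition k :: "real \<Rightarrow> real" where "k z = (1 - exp (\<gamma> * z)) * indicator {..0} z"

lemma k_meas[measurable]: "k \<in> borel_measurable borel" unfolding k_def by measurable

lemma k_bounds: "0 \<le> k z" "k z \<le> 1"
  unfolding k_def using gamma by (auto simp: indicator_def mult_nonneg_nonpos)

lemma exp_max_k: "exp (\<gamma> * max 0 z) = exp (\<gamma> * z) + k z"
  unfolding k_def by (auto simp: indicator_def max_def)

lemma expE: "measure M {\<omega> \<in> space M. E \<omega> \<le> c} = (if 0 \<le> c then 1 - exp (- c * \<gamma>) else 0)"
proof (cases "0 \<le> c")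
  case True
  then show ?thesis using P.exponential_distributedD_le[OF Eexp True gamma] by simp
next
  case False
  have "measure M {\<omega> \<in> space M. E \<omega> \<le> c} \<le> measure M {\<omega> \<in> space M. E \<omega> \<le> 0}"
    using False rv by (intro P.finite_measure_mono) auto
  also have "\<dots> = 0" using P.exponential_distributedD_le[OF Eexp order_refl gamma] by simp
  finally show ?thesis using False by (simp add: measure_nonneg antisym)
qed

lemma kE:
  assumes Z: "Z \<in> borel_measurable M" and ind: "P.indep_var borel Z borel E"
  shows "measure M {\<omega> \<in> space M. Z \<omega> + E \<omega> \<le> 0} = (\<integral>\<omega>. k (Z \<omega>) \<partial>M)"
proof -
  define lZ where "lZ = distr M borel Z"
  define lE where "lE = distr M borel E"
  have pZ: "prob_space lZ" unfolding lZ_def using Z by (rule P.prob_space_distr)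
  have pE: "prob_space lE" unfolding lE_def using rv by (intro P.prob_space_distr) auto
  have joint: "lZ \<Otimes>\<^sub>M lE = distr M (borel \<Otimes>\<^sub>M borel) (\<lambda>\<omega>. (Z \<omega>, E \<omega>))"
    using P.indep_var_distribution_eq[THEN iffD1, OF ind] unfolding lZ_def lE_def by simp
  define S where "S = {ze::real\<times>real. fst ze + snd ze \<le> 0}"
  have mS: "S \<in> sets (borel \<Otimes>\<^sub>M borel)" unfolding S_def by (rule coll_borel2) measurable
  have "measure M {\<omega> \<in> space M. Z \<omega> + E \<omega> \<le> 0} = measure (distr M (borel \<Otimes>\<^sub>M borel) (\<lambda>\<omega>. (Z \<omega>, E \<omega>))) S"
    using Z rv mS by (subst measure_distr) (auto simp: S_def vimage_def Int_def conj_commute intro!: arg_cong[where f="measure M"])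
  also have "\<dots> = measure (lZ \<Otimes>\<^sub>M lE) S" unfolding joint ..
  also have "\<dots> = (\<integral>z. measure lE (Pair z -` S) \<partial>lZ)"
    by (rule pair_measure_fubini1[OF pZ pE _ _ mS]) (simp_all add: lZ_def lE_def)
  also have "\<dots> = (\<integral>z. k z \<partial>lZ)"
  proof (intro Bochner_Integration.integral_cong refl)
    fix z
    have "measure lE (Pair z -` S) = measure M {\<omega> \<in> space M. E \<omega> \<le> - z}"
      unfolding lE_def S_def using rv by (subst measure_distr) (auto simp: vimage_def Int_def conj_commute intro!: arg_cong[where f="measure M"])
    also have "\<dots> = k z" unfolding expE k_def by (simp add: indicator_def algebra_simps)
    finally show "measure lE (Pair z -` S) = k z" .
  qed
  also have "\<dots> = (\<integral>\<omega>. k (Z \<omega>) \<partial>M)" unfolding lZ_def by (rule integral_distr[OF Z k_meas])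
  finally show ?thesis .
qed

lemma Y_pm: "AE \<omega> in M. Y \<omega> = 1 \<or> Y \<omega> = -1"
proof -
  have m1: "{\<omega> \<in> space M. Y \<omega> = 1} \<in> sets M" and m2: "{\<omega> \<in> space M. Y \<omega> = -1} \<in> sets M"
    using rv by measurable
  have "measure M ({\<omega> \<in> space M. Y \<omega> = 1} \<union> {\<omega> \<in> space M. Y \<omega> = -1}) = p + (1 - p)"
    using P.finite_measure_Union[OF m1 m2] Y1 Ym1 by force
  moreover have "{\<omega> \<in> space M. Y \<omega> = 1} \<union> {\<omega> \<in> space M. Y \<omega> = -1} = {\<omega> \<in> space M. Y \<omega> = 1 \<or> Y \<omega> = -1}"
    by auto
  ultimately have one: "measure M {\<omega> \<in> space M. Y \<omega> = 1 \<or> Y \<omega> = -1} = 1" by simp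
  have m: "{\<omega> \<in> space M. Y \<omega> = 1 \<or> Y \<omega> = -1} \<in> sets M" using rv by measurable
  then show ?thesis using one by (simp add: P.prob_eq_1 ) 
qed

lemma EY:
  fixes h :: "real \<Rightarrow> real \<Rightarrow> real"
  assumes hm: "(\<lambda>z. h (fst z) (snd z)) \<in> borel_measurable (borel \<Otimes>\<^sub>M borel)"
    and hi: "integrable M (\<lambda>\<omega>. h (W \<omega>) (X \<omega>))"
  shows "(\<integral>\<omega>. indicator {c} (Y \<omega>) * h (W \<omega>) (X \<omega>) \<partial>M) = measure M {\<omega> \<in> space M. Y \<omega> = c} * (\<integral>\<omega>. h (W \<omega>) (X \<omega>) \<partial>M)"
proof -
  have g: "(\<lambda>u::nat\<Rightarrow>real. h (u 2) (u 0)) \<in> borel_measurable (PiM {2::nat, 0} (\<lambda>_. borel))"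
  proof -
    have "(\<lambda>u. (u 2, u 0)) \<in> measurable (PiM {2::nat, 0} (\<lambda>_. borel)) (borel \<Otimes>\<^sub>M borel)"
      by (intro measurable_Pair measurable_component_singleton) auto
    from measurable_compose[OF this hm] show ?thesis by simp
  qed
  have f: "(\<lambda>u::nat\<Rightarrow>real. indicator {c} (u 1) :: real) \<in> borel_measurable (PiM {1::nat} (\<lambda>_. borel))"
    by (intro borel_measurable_indicator' measurable_component_singleton) auto
  have ind: "P.indep_var borel (\<lambda>\<omega>. indicator {c} (Y \<omega>) :: real) borel (\<lambda>\<omega>. h (W \<omega>) (X \<omega>))"
    using indep_fun[OF _ _ _ f g] by (simp add: rr_app)
  have i1: "integrable M (\<lambda>\<omega>. indicator {c} (Y \<omega>) :: real)"
    by (rule P.integrable_const_bound[where B=1]) (use rv in \<open>auto simp: indicator_def\<close>)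
  have "(\<integral>\<omega>. indicator {c} (Y \<omega>) * h (W \<omega>) (X \<omega>) \<partial>M) = (\<integral>\<omega>. indicator {c} (Y \<omega>) \<partial>M) * (\<integral>\<omega>. h (W \<omega>) (X \<omega>) \<partial>M)"
    by (rule P.indep_var_lebesgue_integral[OF ind i1 hi])
  moreover have "(\<integral>\<omega>. (indicator {c} (Y \<omega>) :: real) \<partial>M) = measure M {\<omega> \<in> space M. Y \<omega> = c}"
  proof -
    have "(\<integral>\<omega>. (indicator {c} (Y \<omega>) :: real) \<partial>M) = (\<integral>\<omega>. indicator {\<omega> \<in> space M. Y \<omega> = c} \<omega> \<partial>M)"
      by (intro Bochner_Integration.integral_cong refl) (auto simp: indicator_def)
    also have "\<dots> = measure M {\<omega> \<in> space M. Y \<omega> = c}" by (simp add: Int_absorb2)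
    finally show ?thesis .
  qed
  ultimately show ?thesis by simp
qed

lemma intXM: "integrable M (\<lambda>\<omega>. exp (\<gamma> * X \<omega>))"
  using A.int_exp unfolding mu_def by (subst (asm) integrable_distr_eq) (auto simp: rv)

lemma intWM: "0 < p \<Longrightarrow> integrable M (\<lambda>\<omega>. exp (\<gamma> * W \<omega>))"
  using nu_lim(2) unfolding nu_def by (subst (asm) integrable_distr_eq) (auto simp: rv)

lemma intbW: "integrable M (\<lambda>\<omega>. exp (- \<gamma> * W \<omega>))"
proof (rule P.integrable_const_bound[where B=1])
  show "AE \<omega> in M. norm (exp (- \<gamma> * W \<omega>)) \<le> 1"
    using W_nonneg by eventually_elim (use gamma in \<open>simp add: mult_nonneg_nonneg\<close>)
  show "(\<lambda>\<omega>. exp (- \<gamma> * W \<omega>)) \<in> borel_measurable M" using rv by measurable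
qed

lemma indep_XW: "P.indep_var borel (\<lambda>\<omega>. exp (\<gamma> * X \<omega>)) borel (\<lambda>\<omega>. exp (c * W \<omega>))"
proof -
  have f: "(\<lambda>u::nat\<Rightarrow>real. exp (\<gamma> * u 0)) \<in> borel_measurable (PiM {0::nat} (\<lambda>_. borel))"
    by measurable
  have g: "(\<lambda>u::nat\<Rightarrow>real. exp (c * u 2)) \<in> borel_measurable (PiM {2::nat} (\<lambda>_. borel))"
    by measurable
  show ?thesis using indep_fun[OF _ _ _ f g] by (simp add: rr_app)
qed

lemma indep_ZE:
  fixes s :: real
  shows "P.indep_var borel (\<lambda>\<omega>. X \<omega> + s * W \<omega>) borel E"
proof -
  have f: "(\<lambda>u::nat\<Rightarrow>real. u 0 + s * u 2) \<in> borel_measurable (PiM {0::nat, 2} (\<lambda>_. borel))"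
    by measurable
  have g: "(\<lambda>u::nat\<Rightarrow>real. u 3) \<in> borel_measurable (PiM {3::nat} (\<lambda>_. borel))"
    by (intro measurable_component_singleton) auto
  have "P.indep_var borel (\<lambda>\<omega>. X \<omega> + s * W \<omega>) borel (\<lambda>\<omega>. E \<omega>)"
    using indep_fun[OF _ _ _ f g] by (simp add: rr_app)
  then show ?thesis by simp
qed

lemma h_int:
  assumes "integrable M (\<lambda>\<omega>. exp (c * W \<omega>))"
  shows "(\<integral>\<omega>. exp (\<gamma> * max 0 (X \<omega> + (c / \<gamma>) * W \<omega>)) \<partial>M) =
        (\<integral>\<omega>. exp (\<gamma> * X \<omega>) \<partial>M) * (\<integral>\<omega>. exp (c * W \<omega>) \<partial>M)
        + measure M {\<omega> \<in> space M. X \<omega> + (c / \<gamma>) * W \<omega> + E \<omega> \<le> 0}"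
    and "integrable M (\<lambda>\<omega>. exp (\<gamma> * max 0 (X \<omega> + (c / \<gamma>) * W \<omega>)))"
proof -
  have eq: "exp (\<gamma> * max 0 (X \<omega> + (c / \<gamma>) * W \<omega>)) = exp (\<gamma> * X \<omega>) * exp (c * W \<omega>) + k (X \<omega> + (c / \<gamma>) * W \<omega>)" for \<omega>
    unfolding exp_max_k using gamma by (simp add: exp_add[symmetric] algebra_simps)
  have i1: "integrable M (\<lambda>\<omega>. exp (\<gamma> * X \<omega>) * exp (c * W \<omega>))"
    by (rule P.indep_var_integrable[OF indep_XW intXM assms])
  have i2: "integrable M (\<lambda>\<omega>. k (X \<omega> + (c / \<gamma>) * W \<omega>))"
    by (rule P.integrable_const_bound[where B=1]) (use rv k_bounds in \<open>auto simp: abs_of_nonneg\<close>)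
  show "integrable M (\<lambda>\<omega>. exp (\<gamma> * max 0 (X \<omega> + (c / \<gamma>) * W \<omega>)))"
    unfolding eq using i1 i2 by simp
  have "(\<integral>\<omega>. exp (\<gamma> * max 0 (X \<omega> + (c / \<gamma>) * W \<omega>)) \<partial>M) =
      (\<integral>\<omega>. exp (\<gamma> * X \<omega>) * exp (c * W \<omega>) \<partial>M) + (\<integral>\<omega>. k (X \<omega> + (c / \<gamma>) * W \<omega>) \<partial>M)"
    unfolding eq using i1 i2 by simp
  also have "(\<integral>\<omega>. exp (\<gamma> * X \<omega>) * exp (c * W \<omega>) \<partial>M) = (\<integral>\<omega>. exp (\<gamma> * X \<omega>) \<partial>M) * (\<integral>\<omega>. exp (c * W \<omega>) \<partial>M)"
    by (rule P.indep_var_lebesgue_integral[OF indep_XW intXM assms])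
  also have "(\<integral>\<omega>. k (X \<omega> + (c / \<gamma>) * W \<omega>) \<partial>M) = measure M {\<omega> \<in> space M. X \<omega> + (c / \<gamma>) * W \<omega> + E \<omega> \<le> 0}"
    by (rule kE[symmetric, OF _ indep_ZE[of "c / \<gamma>"]]) (use rv in auto)
  finally show "(\<integral>\<omega>. exp (\<gamma> * max 0 (X \<omega> + (c / \<gamma>) * W \<omega>)) \<partial>M) =
        (\<integral>\<omega>. exp (\<gamma> * X \<omega>) \<partial>M) * (\<integral>\<omega>. exp (c * W \<omega>) \<partial>M)
        + measure M {\<omega> \<in> space M. X \<omega> + (c / \<gamma>) * W \<omega> + E \<omega> \<le> 0}" .
qed

lemma a_ident:
  assumes p: "0 < p"
  shows "(\<integral>\<omega>. exp (\<gamma> * W \<omega>) \<partial>M) =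
    p * ((\<integral>\<omega>. exp (\<gamma> * X \<omega>) \<partial>M) * (\<integral>\<omega>. exp (\<gamma> * W \<omega>) \<partial>M) + measure M {\<omega> \<in> space M. X \<omega> + W \<omega> + E \<omega> \<le> 0})
    + (1 - p) * ((\<integral>\<omega>. exp (\<gamma> * X \<omega>) \<partial>M) * (\<integral>\<omega>. exp (- \<gamma> * W \<omega>) \<partial>M) + measure M {\<omega> \<in> space M. X \<omega> - W \<omega> + E \<omega> \<le> 0})"
proof -
  have g0: "\<gamma> \<noteq> 0" using gamma by simp
  have e1: "(\<integral>\<omega>. exp (\<gamma> * max 0 (X \<omega> + W \<omega>)) \<partial>M) =
     (\<integral>\<omega>. exp (\<gamma> * X \<omega>) \<partial>M) * (\<integral>\<omega>. exp (\<gamma> * W \<omega>) \<partial>M) + measure M {\<omega> \<in> space M. X \<omega> + W \<omega> + E \<omega> \<le> 0}"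
    and i1: "integrable M (\<lambda>\<omega>. exp (\<gamma> * max 0 (X \<omega> + W \<omega>)))"
    using h_int[of \<gamma>, OF intWM[OF p]] g0 by simp_all
  have e2: "(\<integral>\<omega>. exp (\<gamma> * max 0 (X \<omega> - W \<omega>)) \<partial>M) =
     (\<integral>\<omega>. exp (\<gamma> * X \<omega>) \<partial>M) * (\<integral>\<omega>. exp (- \<gamma> * W \<omega>) \<partial>M) + measure M {\<omega> \<in> space M. X \<omega> - W \<omega> + E \<omega> \<le> 0}"
    and i2: "integrable M (\<lambda>\<omega>. exp (\<gamma> * max 0 (X \<omega> - W \<omega>)))"
    using h_int[of "- \<gamma>", OF intbW] g0 by simp_all
  have hm1: "(\<lambda>z. exp (\<gamma> * max 0 (snd z + fst z))) \<in> borel_measurable (borel \<Otimes>\<^sub>M borel)" by measurable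
  have hm2: "(\<lambda>z. exp (\<gamma> * max 0 (snd z - fst z))) \<in> borel_measurable (borel \<Otimes>\<^sub>M borel)" by measurable
  have "(\<integral>\<omega>. exp (\<gamma> * W \<omega>) \<partial>M) = (\<integral>w. exp (\<gamma> * w) \<partial>nu)"
    unfolding nu_def by (rule integral_distr[symmetric]) (auto simp: rv)
  also have "\<dots> = (\<integral>\<omega>. exp (\<gamma> * max 0 (Y \<omega> * W \<omega> + X \<omega>)) \<partial>M)"
    unfolding nu_def stat[symmetric] by (rule integral_distr) (use rv in auto)
  also have "\<dots> = (\<integral>\<omega>. indicator {1} (Y \<omega>) * exp (\<gamma> * max 0 (X \<omega> + W \<omega>))
                    + indicator {-1} (Y \<omega>) * exp (\<gamma> * max 0 (X \<omega> - W \<omega>)) \<partial>M)"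
  proof (rule integral_cong_AE)
    show "(\<lambda>\<omega>. exp (\<gamma> * max 0 (Y \<omega> * W \<omega> + X \<omega>))) \<in> borel_measurable M" using rv by measurable
    show "(\<lambda>\<omega>. indicator {1} (Y \<omega>) * exp (\<gamma> * max 0 (X \<omega> + W \<omega>))
                    + indicator {-1} (Y \<omega>) * exp (\<gamma> * max 0 (X \<omega> - W \<omega>))) \<in> borel_measurable M"
      using rv by measurable
    show "AE \<omega> in M. exp (\<gamma> * max 0 (Y \<omega> * W \<omega> + X \<omega>)) = indicator {1} (Y \<omega>) * exp (\<gamma> * max 0 (X \<omega> + W \<omega>))
                    + indicator {-1} (Y \<omega>) * exp (\<gamma> * max 0 (X \<omega> - W \<omega>))"
      using Y_pm by eventually_elim (auto simp: indicator_def algebra_simps)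
  qed
  also have "\<dots> = (\<integral>\<omega>. indicator {1} (Y \<omega>) * exp (\<gamma> * max 0 (X \<omega> + W \<omega>)) \<partial>M)
                  + (\<integral>\<omega>. indicator {-1} (Y \<omega>) * exp (\<gamma> * max 0 (X \<omega> - W \<omega>)) \<partial>M)"
  proof (rule Bochner_Integration.integral_add)
    show "integrable M (\<lambda>\<omega>. indicator {1} (Y \<omega>) * exp (\<gamma> * max 0 (X \<omega> + W \<omega>)))"
      by (rule Bochner_Integration.integrable_bound[OF i1]) (use rv in \<open>auto simp: indicator_def\<close>)
    show "integrable M (\<lambda>\<omega>. indicator {-1} (Y \<omega>) * exp (\<gamma> * max 0 (X \<omega> - W \<omega>)))"
      by (rule Bochner_Integration.integrable_bound[OF i2]) (use rv in \<open>auto simp: indicator_def\<close>)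
  qed
  also have "(\<integral>\<omega>. indicator {1} (Y \<omega>) * exp (\<gamma> * max 0 (X \<omega> + W \<omega>)) \<partial>M) =
      p * (\<integral>\<omega>. exp (\<gamma> * max 0 (X \<omega> + W \<omega>)) \<partial>M)"
    using EY[OF hm1, of 1] i1 Y1 by simp
  also have "(\<integral>\<omega>. indicator {-1} (Y \<omega>) * exp (\<gamma> * max 0 (X \<omega> - W \<omega>)) \<partial>M) =
      (1 - p) * (\<integral>\<omega>. exp (\<gamma> * max 0 (X \<omega> - W \<omega>)) \<partial>M)"
    using EY[OF hm2, of "-1"] i2 Ym1 by simp
  finally show ?thesis unfolding e1 e2 .
qed

theorem final:
  shows "(\<lambda>x. measure M {\<omega> \<in> space M. W \<omega> > x})
     \<sim>[at_top] (\<lambda>x. ((1 - p) * p / (1 - p * (\<integral>\<omega>. exp (\<gamma> * X \<omega>) \<partial>M))^2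
              * (measure M {\<omega> \<in> space M. X \<omega> - W \<omega> + E \<omega> \<le> 0}
                 + p / (1 - p) * measure M {\<omega> \<in> space M. X \<omega> + W \<omega> + E \<omega> \<le> 0})
            + (1 - p) / (1 - p * (\<integral>\<omega>. exp (\<gamma> * X \<omega>) \<partial>M))^2
              * (\<integral>\<omega>. exp (- \<gamma> * W \<omega>) \<partial>M))
           * measure M {\<omega> \<in> space M. X \<omega> > x})"
proof -
  define ph where "ph = (\<integral>\<omega>. exp (\<gamma> * X \<omega>) \<partial>M)"
  define aW where "aW = (\<integral>\<omega>. exp (\<gamma> * W \<omega>) \<partial>M)"
  define bW where "bW = (\<integral>\<omega>. exp (- \<gamma> * W \<omega>) \<partial>M)"
  define K1 where "K1 = measure M {\<omega> \<in> space M. X \<omega> + W \<omega> + E \<omega> \<le> 0}"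
  define K2 where "K2 = measure M {\<omega> \<in> space M. X \<omega> - W \<omega> + E \<omega> \<le> 0}"
  define d where "d = 1 - p * ph"
  have d: "0 < d" unfolding d_def ph_def using phiM by simp
  have Gx: "measure M {\<omega> \<in> space M. X \<omega> > x} = A.G x" for x
    unfolding A.G_def unfolding mu_def using rv by (subst measure_distr) (auto simp: vimage_def Int_def conj_commute)
  have Fx: "measure M {\<omega> \<in> space M. W \<omega> > x} = measure nu {x<..}" for x
    unfolding nu_def using rv by (subst measure_distr) (auto simp: vimage_def Int_def conj_commute)
  have ia: "(\<integral>w. exp (\<gamma> * w) \<partial>nu) = aW" unfolding nu_def aW_def by (rule integral_distr) (auto simp: rv)
  have ib: "(\<integral>w. exp (- \<gamma> * w) \<partial>nu) = bW" unfolding nu_def bW_def by (rule integral_distr) (auto simp: rv)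
  have lim: "((\<lambda>x. measure M {\<omega> \<in> space M. W \<omega> > x} / measure M {\<omega> \<in> space M. X \<omega> > x}) \<longlongrightarrow>
      (p * aW + (1 - p) * bW) / d) at_top"
    using nu_lim(1) unfolding Gx Fx ia ib d_def ph_def phi_eq .
  have bpos: "0 < bW"
  proof -
    have "0 \<le> bW" unfolding bW_def by simp
    moreover have "bW \<noteq> 0"
    proof
      assume "bW = 0"
      then have "AE \<omega> in M. exp (- \<gamma> * W \<omega>) = 0"
        unfolding bW_def using integral_nonneg_eq_0_iff_AE[OF intbW] by simp
      then show False using P.AE_False by simp
    qed
    ultimately show ?thesis by simp
  qed
  have apos: "0 \<le> aW" unfolding aW_def by simp
  have Cpos: "0 < (p * aW + (1 - p) * bW) / d"
    using d bpos apos p0 p1 by (intro divide_pos_pos add_nonneg_pos mult_nonneg_nonneg mult_pos_pos) auto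
  have Cne: "(p * aW + (1 - p) * bW) / d \<noteq> 0" using Cpos by linarith
  have eqC: "(1 - p) * p / d^2 * (K2 + p / (1 - p) * K1) + (1 - p) / d^2 * bW = (p * aW + (1 - p) * bW) / d"
  proof (cases "p = 0")
    case True then show ?thesis unfolding d_def by simp
  next
    case False
    then have pp: "0 < p" using p0 by simp
    have ai: "aW = p * (ph * aW + K1) + (1 - p) * (ph * bW + K2)"
      using a_ident[OF pp] unfolding aW_def ph_def bW_def K1_def K2_def .
    have ad: "aW * d = p * K1 + (1 - p) * (ph * bW + K2)"
      unfolding d_def using ai by (simp add: algebra_simps)
    have p1': "1 - p \<noteq> 0" using p1 by simp
    have "(1 - p) * p / d^2 * (K2 + p / (1 - p) * K1) + (1 - p) / d^2 * bW =
          ((1 - p) * p * K2 + p * p * K1 + (1 - p) * bW) / d^2"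
    proof -
      have c: "(1 - p) * (K2 + p / (1 - p) * K1) = (1 - p) * K2 + p * K1"
        using p1' by (simp add: distrib_left)
      have "(1 - p) * p / d^2 * (K2 + p / (1 - p) * K1) = p * ((1 - p) * (K2 + p / (1 - p) * K1)) / d^2"
        by simp
      also have "\<dots> = ((1 - p) * p * K2 + p * p * K1) / d^2" unfolding c by (simp add: algebra_simps)
      finally have "(1 - p) * p / d^2 * (K2 + p / (1 - p) * K1) = ((1 - p) * p * K2 + p * p * K1) / d^2" .
      then show ?thesis by (simp add: add_divide_distrib)
    qed
    also have "(1 - p) * p * K2 + p * p * K1 + (1 - p) * bW = (p * aW + (1 - p) * bW) * d"
    proof -
      have "(p * aW + (1 - p) * bW) * d = p * (aW * d) + (1 - p) * bW * d" by (simp add: algebra_simps)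
      also have "\<dots> = p * (p * K1 + (1 - p) * (ph * bW + K2)) + (1 - p) * bW * (1 - p * ph)"
        by (simp only: ad) (simp add: d_def)
      finally show ?thesis by (simp add: algebra_simps)
    qed
    also have "\<dots> / d^2 = (p * aW + (1 - p) * bW) / d" using d by (simp add: power2_eq_square)
    finally show ?thesis .
  qed
  show ?thesis
    unfolding ph_def[symmetric] K1_def[symmetric] K2_def[symmetric] bW_def[symmetric] d_def[symmetric]
    unfolding eqC
    by (rule asymp_equivI'_const[OF lim Cne])
qed

end

theorem theorem5p3:
  fixes M :: "'a measure" and X Y W E :: "'a \<Rightarrow> real" and p \<gamma> :: real
  assumes "prob_space M"
    and indep: "prob_space.indep_vars M (\<lambda>_. borel) (\<lambda>i. [X, Y, W, E] ! i) {..<4}"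
    and nonlattice: "\<not> lattice_law (distr M borel X)"
    and neg: "measure M {\<omega> \<in> space M. X \<omega> < 0} > 0"
    and p: "0 \<le> p" "p < 1"
    and Y1: "measure M {\<omega> \<in> space M. Y \<omega> = 1} = p"
    and Ym1: "measure M {\<omega> \<in> space M. Y \<omega> = -1} = 1 - p"
    and gamma: "\<gamma> > 0"
    and S: "class_S \<gamma> (distr M borel X)"
    and phi: "p * (\<integral>\<omega>. exp (\<gamma> * X \<omega>) \<partial>M) < 1"
    and stat: "distr M borel (\<lambda>\<omega>. max 0 (Y \<omega> * W \<omega> + X \<omega>)) = distr M borel W"
    and Eexp: "distributed M lborel E (exponential_density \<gamma>)"
  shows "(\<lambda>x. measure M {\<omega> \<in> space M. W \<omega> > x})
     \<sim>[at_top] (\<lambda>x. ((1 - p) * p / (1 - p * (\<integral>\<omega>. exp (\<gamma> * X \<omega>) \<partial>M))^2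
              * (measure M {\<omega> \<in> space M. X \<omega> - W \<omega> + E \<omega> \<le> 0}
                 + p / (1 - p) * measure M {\<omega> \<in> space M. X \<omega> + W \<omega> + E \<omega> \<le> 0})
            + (1 - p) / (1 - p * (\<integral>\<omega>. exp (\<gamma> * X \<omega>) \<partial>M))^2
              * (\<integral>\<omega>. exp (- \<gamma> * W \<omega>) \<partial>M))
           * measure M {\<omega> \<in> space M. X \<omega> > x})"
    using thm_setup.final[OF thm_setup.intro[OF assms(1) indep neg p Y1 Ym1 gamma S phi stat Eexp]] .

end
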